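(* For every integer $N\ge1$, the family $(\mathscr W_\alpha)_{\alpha\in\Lambda^\star_N}$ is a basis of the space $H_N$.
   Context: $H_N$ is the space of functions on $\mathbb R^3$ of the form $v(x)=\sum_{k=0}^N\frac{p_k(x)}{(|x|^2+1)^{k+1/2}}$, where each $p_k$ is a real polynomial on $\mathbb R^3$ of degree at most $k$. Index sets: $\Lambda=\{(k,\ell,m)\in\mathbb N^2\times\mathbb Z:0\le\ell\le k,\ -\ell\le m\le\ell\}$, $\Lambda_k=\{(i,\ell,m)\in\Lambda:i=k\}$, $\Lambda^\star_N=\bigcup_{i=0}^N\Lambda_i$. Arar–Boulmezaoud functions: write points of $\mathbb S^3\subset\mathbb R^4$ as $\xi=(\sin\theta\cos\phi\sin\chi,\sin\theta\sin\phi\sin\chi,\cos\theta\sin\chi,\cos\chi)$, $\phi\in[0,2\pi)$, $\theta,\chi\in[0,\pi]$. $T_n$ is the Chebyshev polynomial of the first kind ($T_n(\cos t)=\cos(nt)$), $T_n^{(j)}$ its $j$-th derivative. For $-\ell\le m\le\ell$, $P_\ell^m(t)=\frac{(-1)^m}{2^\ell\ell!}(1-t^2)^{m/2}\frac{d^{\ell+m}}{dt^{\ell+m}}(t^2-1)^\ell$, $K_\ell^m=(-1)^m\sqrt{\frac{(\ell-m)!}{(\ell+m)!}}P_\ell^m$, $Y_{\ell,m}(\phi,\theta)=\sqrt{\frac{2\ell+1}{2\pi}}K_\ell^{|m|}(\cos\theta)y_m(\phi)$ with $y_m(\phi)=\cos(m\phi)$ ($m\ge1$), $1/\sqrt2$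 ($m=0$), $\sin(|m|\phi)$ ($m\le-1$). For $\alpha=(k,\ell,m)\in\Lambda$, $a_{k,\ell}=\frac{(k+1)\pi}{2}\frac{(k+\ell+1)!}{(k-\ell)!}$, $\mathscr Y_\alpha(\xi)=a_{k,\ell}^{-1/2}(\sin\chi)^\ell T^{(\ell+1)}_{k+1}(\cos\chi)Y_{\ell,m}(\phi,\theta)$, and $\mathscr W_\alpha(x)=\big(\frac{2}{|x|^2+1}\big)^{1/2}\mathscr Y_\alpha(\pi^{-1}(x))$ where $\pi^{-1}(x)=\big(\frac{2x_1}{|x|^2+1},\frac{2x_2}{|x|^2+1},\frac{2x_3}{|x|^2+1},\frac{|x|^2-1}{|x|^2+1}\big)$. *)

theory Defs
  imports Complex_Main "HOL-Computational_Algebra.Polynomial"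
begin

type_synonym pt3 = "real \<times> real \<times> real"
type_synonym pt4 = "real \<times> real \<times> real \<times> real"

definition sqn3 :: "pt3 \<Rightarrow> real" where
  "sqn3 x = (case x of (x1, x2, x3) \<Rightarrow> x1^2 + x2^2 + x3^2)"

definition mpoly3 :: "nat \<Rightarrow> (nat \<times> nat \<times> nat \<Rightarrow> real) \<Rightarrow> pt3 \<Rightarrow> real" where
  "mpoly3 k c x = (case x of (x1, x2, x3) \<Rightarrow>
     (\<Sum>(a, b, d) \<in> {(a, b, d). a + b + d \<le> k}. c (a, b, d) * x1^a * x2^b * x3^d))"

definition HN :: "nat \<Rightarrow> (pt3 \<Rightarrow> real) set" where
  "HN N = {v. \<exists>p :: nat \<Rightarrow> (nat \<times> nat \<times> nat \<Rightarrow> real).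
      \<forall>x. v x = (\<Sum>k\<le>N. mpoly3 k (p k) x / (sqn3 x + 1) powr (real k + 1/2))}"

definition Lambda :: "(nat \<times> nat \<times> int) set" where
  "Lambda = {(k, l, m). l \<le> k \<and> - int l \<le> m \<and> m \<le> int l}"

definition Lambda_k :: "nat \<Rightarrow> (nat \<times> nat \<times> int) set" where
  "Lambda_k k = {(i, l, m) \<in> Lambda. i = k}"

definition LambdaStar :: "nat \<Rightarrow> (nat \<times> nat \<times> int) set" where
  "LambdaStar N = (\<Union>i\<in>{0..N}. Lambda_k i)"

fun cheb :: "nat \<Rightarrow> real poly" where
  "cheb 0 = 1"
| "cheb (Suc 0) = [:0, 1:]"
| "cheb (Suc (Suc n)) = [:0, 2:] * cheb (Suc n) - cheb n"

definition chebD :: "nat \<Rightarrow> nat \<Rightarrow> real \<Rightarrow> real" where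
  "chebD n j t = poly ((pderiv ^^ j) (cheb n)) t"

definition assocP :: "nat \<Rightarrow> nat \<Rightarrow> real \<Rightarrow> real" where
  "assocP l m t = (-1)^m / (2^l * fact l) * sqrt (1 - t^2) ^ m
      * poly ((pderiv ^^ (l + m)) ([:-1, 0, 1:] ^ l)) t"

definition assocK :: "nat \<Rightarrow> nat \<Rightarrow> real \<Rightarrow> real" where
  "assocK l m t = (-1)^m * sqrt (fact (l - m) / fact (l + m)) * assocP l m t"

definition ytrig :: "int \<Rightarrow> real \<Rightarrow> real" where
  "ytrig m \<phi> = (if m \<ge> 1 then cos (real_of_int m * \<phi>)
                 else if m = 0 then 1 / sqrt 2 else sin (real_of_int (\<bar>m\<bar>) * \<phi>))"

definition Ysph :: "nat \<Rightarrow> int \<Rightarrow> real \<Rightarrow> real \<Rightarrow> real" where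
  "Ysph l m \<phi> \<theta> = sqrt ((2 * real l + 1) / (2 * pi)) * assocK l (nat \<bar>m\<bar>) (cos \<theta>) * ytrig m \<phi>"

definition acoef :: "nat \<Rightarrow> nat \<Rightarrow> real" where
  "acoef k l = (real k + 1) * pi / 2 * (fact (k + l + 1) / fact (k - l))"

definition Yang :: "nat \<times> nat \<times> int \<Rightarrow> real \<Rightarrow> real \<Rightarrow> real \<Rightarrow> real" where
  "Yang \<alpha> \<phi> \<theta> \<chi> = (case \<alpha> of (k, l, m) \<Rightarrow>
     acoef k l powr (-1/2) * sin \<chi> ^ l * chebD (k + 1) (l + 1) (cos \<chi>) * Ysph l m \<phi> \<theta>)"

definition sph3 :: "real \<Rightarrow> real \<Rightarrow> real \<Rightarrow> pt4" where
  "sph3 \<phi> \<theta> \<chi> = (sin \<theta> * cos \<phi> * sin \<chi>, sin \<theta> * sin \<phi> * sin \<chi>, cos \<theta> * sin \<chi>, cos \<chi>)"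

definition angle_ok :: "real \<times> real \<times> real \<Rightarrow> bool" where
  "angle_ok a = (case a of (\<phi>, \<theta>, \<chi>) \<Rightarrow> 0 \<le> \<phi> \<and> \<phi> < 2 * pi \<and> 0 \<le> \<theta> \<and> \<theta> \<le> pi \<and> 0 \<le> \<chi> \<and> \<chi> \<le> pi)"

definition Ycal :: "nat \<times> nat \<times> int \<Rightarrow> pt4 \<Rightarrow> real" where
  "Ycal \<alpha> \<xi> = (case (SOME a. angle_ok a \<and> \<xi> = (case a of (\<phi>, \<theta>, \<chi>) \<Rightarrow> sph3 \<phi> \<theta> \<chi>)) of
       (\<phi>, \<theta>, \<chi>) \<Rightarrow> Yang \<alpha> \<phi> \<theta> \<chi>)"

definition invstereo :: "pt3 \<Rightarrow> pt4" where
  "invstereo x = (case x of (x1, x2, x3) \<Rightarrow>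
     (2 * x1 / (sqn3 x + 1), 2 * x2 / (sqn3 x + 1), 2 * x3 / (sqn3 x + 1), (sqn3 x - 1) / (sqn3 x + 1)))"

definition Wfun :: "nat \<times> nat \<times> int \<Rightarrow> pt3 \<Rightarrow> real" where
  "Wfun \<alpha> x = sqrt (2 / (sqn3 x + 1)) * Ycal \<alpha> (invstereo x)"

definition family_basis :: "('b \<Rightarrow> real) set \<Rightarrow> 'a set \<Rightarrow> ('a \<Rightarrow> 'b \<Rightarrow> real) \<Rightarrow> bool" where
  "family_basis V I f \<longleftrightarrow>
     (\<forall>i\<in>I. f i \<in> V) \<and>
     (\<forall>c. (\<lambda>x. \<Sum>i\<in>I. c i * f i x) = (\<lambda>x. 0) \<longrightarrow> (\<forall>i\<in>I. c i = 0)) \<and>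
     (\<forall>v\<in>V. \<exists>c. v = (\<lambda>x. \<Sum>i\<in>I. c i * f i x))"

end

theory Submission
  imports Defs "HOL-Library.Function_Algebras"
begin


instantiation "fun" :: (type, real_vector) real_vector
begin
definition scaleR_fun :: "real \<Rightarrow> ('a \<Rightarrow> 'b) \<Rightarrow> 'a \<Rightarrow> 'b" where
  "scaleR_fun c f = (\<lambda>x. c *\<^sub>R f x)"
instance
  by standard (auto simp: scaleR_fun_def fun_eq_iff scaleR_add_right scaleR_add_left)
end

lemma scaleR_fun_apply[simp]: "(c *\<^sub>R f) x = c *\<^sub>R f x"
  by (simp add: scaleR_fun_def)

lemma sum_fun_apply: "(\<Sum>i\<in>A. f i) x = (\<Sum>i\<in>A. f i x)"
  by (induction A rule: infinite_finite_induct) auto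

definition Lf :: "(pt4 \<Rightarrow> real) \<Rightarrow> pt3 \<Rightarrow> real" where
  "Lf P x = sqrt (2 / (sqn3 x + 1)) * P (invstereo x)"

fun mono4 :: "nat \<times> nat \<times> nat \<times> nat \<Rightarrow> pt4 \<Rightarrow> real" where
  "mono4 (a, b, c, e) (y1, y2, y3, y4) = y1^a * y2^b * y3^c * y4^e"

definition Iset :: "nat \<Rightarrow> (nat \<times> nat \<times> nat \<times> nat) set" where
  "Iset N = {(a, b, c, e). e \<le> 1 \<and> a + b + c + e \<le> N}"

definition Tset :: "nat \<Rightarrow> (pt3 \<Rightarrow> real) set" where
  "Tset N = (\<lambda>\<beta>. Lf (mono4 \<beta>)) ` Iset N"

lemma finite_Iset: "finite (Iset N)"
proof -
  have "Iset N \<subseteq> {..N} \<times> {..N} \<times> {..N} \<times> {..N}" by (auto simp: Iset_def)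
  then show ?thesis by (rule finite_subset) auto
qed

lemma finite_Tset: "finite (Tset N)"
  unfolding Tset_def using finite_Iset by simp

lemma LambdaStar_eq: "LambdaStar N = {(k, l, m). l \<le> k \<and> k \<le> N \<and> - int l \<le> m \<and> m \<le> int l}"
  by (auto simp: LambdaStar_def Lambda_k_def Lambda_def)

lemma finite_LambdaStar: "finite (LambdaStar N)"
proof -
  have "LambdaStar N \<subseteq> {..N} \<times> {..N} \<times> {-int N..int N}" by (auto simp: LambdaStar_eq)
  then show ?thesis by (rule finite_subset) auto
qed

lemma card_Iset_le: "card (Iset N) \<le> card (LambdaStar N)"
proof -
  define g where "g = (\<lambda>(a::nat, b::nat, c::nat, e::nat). (a + b + c + e, b + c + e,
      if e = 0 then int b else - int b - 1))"
  have "inj_on g (Iset N)"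
    unfolding inj_on_def g_def Iset_def by (auto split: if_splits)
  moreover have "g ` Iset N \<subseteq> LambdaStar N"
    unfolding g_def Iset_def LambdaStar_eq by (auto split: if_splits)
  ultimately show ?thesis using card_inj_on_le finite_LambdaStar by blast
qed



lemma sqn3_simp[simp]: "sqn3 (x1, x2, x3) = x1^2 + x2^2 + x3^2"
  by (simp add: sqn3_def)

lemma sqn3_nonneg: "sqn3 x \<ge> 0"
  by (cases x) auto

lemma invstereo_simp: "invstereo (x1, x2, x3) =
  (let q = x1^2 + x2^2 + x3^2 in (2 * x1 / (q + 1), 2 * x2 / (q + 1), 2 * x3 / (q + 1), (q - 1) / (q + 1)))"
  by (simp add: invstereo_def Let_def)

lemma fun_eq3: "(\<And>x1 x2 x3. f (x1, x2, x3) = g (x1, x2, x3)) \<Longrightarrow> f = g"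
  by (rule ext) (metis prod_cases3)

definition coord :: "nat \<Rightarrow> pt4 \<Rightarrow> real" where
  "coord i y = (case y of (y1, y2, y3, y4) \<Rightarrow> if i = 0 then y1 else if i = 1 then y2 else if i = 2 then y3 else y4)"

inductive polyfun :: "nat \<Rightarrow> (pt4 \<Rightarrow> real) \<Rightarrow> bool" where
  pconst: "polyfun n (\<lambda>_. c)"
| pmul: "i < 4 \<Longrightarrow> polyfun n f \<Longrightarrow> polyfun (Suc n) (\<lambda>y. coord i y * f y)"
| padd: "polyfun n f \<Longrightarrow> polyfun n g \<Longrightarrow> polyfun n (\<lambda>y. f y + g y)"
| pscale: "polyfun n f \<Longrightarrow> polyfun n (\<lambda>y. c * f y)"
| pmono: "polyfun n f \<Longrightarrow> polyfun (Suc n) f"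

lemma polyfun_mono_le: "polyfun n f \<Longrightarrow> n \<le> m \<Longrightarrow> polyfun m f"
  by (induction m) (auto intro: pmono simp: le_Suc_eq)

lemma polyfun_mult: "polyfun a f \<Longrightarrow> polyfun b g \<Longrightarrow> polyfun (a + b) (\<lambda>y. f y * g y)"
proof (induction a f rule: polyfun.induct)
  case (pconst n c)
  then show ?case using pscale[OF pconst(1), of c] polyfun_mono_le by (metis le_add2)
next
  case (pmul i n f)
  then have "polyfun (Suc (n + b)) (\<lambda>y. coord i y * (f y * g y))" by (intro polyfun.pmul) auto
  then show ?case by (simp add: mult.assoc)
next
  case (padd n f g')
  then show ?case using polyfun.padd[OF padd.IH] by (simp add: distrib_right)
next
  case (pscale n f c)
  then show ?case using polyfun.pscale[OF pscale.IH, of c] by (simp add: mult.assoc)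
next
  case (pmono n f)
  then show ?case using polyfun.pmono by auto
qed

lemma polyfun_coord: "i < 4 \<Longrightarrow> polyfun 1 (coord i)"
  using pmul[OF _ pconst[of 0 1], of i] by simp

lemma polyfun_pow: "polyfun 1 h \<Longrightarrow> polyfun n (\<lambda>y. h y ^ n)"
proof (induction n)
  case 0 then show ?case using pconst[of 0 1] by simp
next
  case (Suc n)
  then show ?case using polyfun_mult[OF Suc.prems Suc.IH[OF Suc.prems]] by simp
qed

lemma polyfun_sum: "finite A \<Longrightarrow> (\<And>i. i \<in> A \<Longrightarrow> polyfun n (f i)) \<Longrightarrow> polyfun n (\<lambda>y. \<Sum>i\<in>A. f i y)"
  by (induction A rule: finite_induct) (auto intro: padd pconst[of n 0, simplified])

lemma polyfun_diff: "polyfun n f \<Longrightarrow> polyfun n g \<Longrightarrow> polyfun n (\<lambda>y. f y - g y)"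
  using padd[of n f "\<lambda>y. (-1) * g y"] pscale[of n g "-1"] by simp

lemma Lf_add: "Lf (\<lambda>y. f y + g y) = Lf f + Lf g"
  by (simp add: Lf_def fun_eq_iff distrib_left)

lemma Lf_scale: "Lf (\<lambda>y. c * f y) = c *\<^sub>R Lf f"
  by (simp add: Lf_def fun_eq_iff)

lemma Iset_mono: "n \<le> m \<Longrightarrow> Iset n \<subseteq> Iset m"
  by (auto simp: Iset_def)

lemma Tset_mono: "n \<le> m \<Longrightarrow> Tset n \<subseteq> Tset m"
  unfolding Tset_def using Iset_mono by blast

lemma inv_sphere: "invstereo x = (y1, y2, y3, y4) \<Longrightarrow> y1^2 + y2^2 + y3^2 + y4^2 = 1"
proof -
  assume h: "invstereo x = (y1, y2, y3, y4)"
  obtain x1 x2 x3 where x: "x = (x1, x2, x3)" by (metis prod_cases3)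
  define q where "q = x1^2 + x2^2 + x3^2"
  have q: "q \<ge> 0" by (simp add: q_def)
  have y: "y1 = 2 * x1 / (q + 1)" "y2 = 2 * x2 / (q + 1)" "y3 = 2 * x3 / (q + 1)" "y4 = (q - 1) / (q + 1)"
    using h by (auto simp: x invstereo_simp q_def Let_def)
  have A: "y1^2 + y2^2 + y3^2 + y4^2 = (4 * (x1^2 + x2^2 + x3^2) + (q - 1)^2) / (q + 1)^2"
    by (simp add: y power_divide add_divide_distrib[symmetric])
  have B: "4 * (x1^2 + x2^2 + x3^2) + (q - 1)^2 = (q + 1)^2" by (simp add: q_def power2_eq_square algebra_simps)
  have C: "(q + 1)^2 \<noteq> 0" using q by simp
  show ?thesis using A B C by simp
qed

lemma mono4_0[simp]: "mono4 (0, 0, 0, 0) y = 1"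
  by (cases y) auto

lemma mono4_alt: "mono4 (a, b, c, e) y = coord 0 y ^ a * coord 1 y ^ b * coord 2 y ^ c * coord 3 y ^ e"
  by (cases y) (simp add: coord_def)

lemma Tset_in: "\<beta> \<in> Iset n \<Longrightarrow> Lf (mono4 \<beta>) \<in> span (Tset n)"
  by (rule span_base) (auto simp: Tset_def)

lemma mult_coord_base:
  assumes "i < 4" "\<beta> \<in> Iset n"
  shows "Lf (\<lambda>y. coord i y * mono4 \<beta> y) \<in> span (Tset (Suc n))"
proof -
  obtain a b c e where b: "\<beta> = (a, b, c, e)" by (metis prod_cases4)
  have e: "e \<le> 1" "a + b + c + e \<le> n" using assms(2) by (auto simp: b Iset_def)
  consider "i = 0" | "i = 1" | "i = 2" | "i = 3" using assms(1) by linarith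
  then show ?thesis
  proof cases
    case 1
    have "(\<lambda>y. coord i y * mono4 \<beta> y) = mono4 (Suc a, b, c, e)"
      by (simp add: fun_eq_iff b mono4_alt algebra_simps 1)
    then show ?thesis using e by (auto intro!: Tset_in simp: Iset_def)
  next
    case 2
    have "(\<lambda>y. coord i y * mono4 \<beta> y) = mono4 (a, Suc b, c, e)"
      by (simp add: fun_eq_iff b mono4_alt algebra_simps 2)
    then show ?thesis using e by (auto intro!: Tset_in simp: Iset_def)
  next
    case 3
    have "(\<lambda>y. coord i y * mono4 \<beta> y) = mono4 (a, b, Suc c, e)"
      by (simp add: fun_eq_iff b mono4_alt algebra_simps 3)
    then show ?thesis using e by (auto intro!: Tset_in simp: Iset_def)
  next
    case 4
    show ?thesis
    proof (cases "e = 0")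
      case True
      have "(\<lambda>y. coord i y * mono4 \<beta> y) = mono4 (a, b, c, 1)"
        by (simp add: fun_eq_iff b mono4_alt 4 True algebra_simps)
      then show ?thesis using e True by (auto intro!: Tset_in simp: Iset_def)
    next
      case False
      then have e1: "e = 1" using e by simp
      have "Lf (\<lambda>y. coord i y * mono4 \<beta> y) =
          Lf (mono4 (a, b, c, 0)) - Lf (mono4 (a + 2, b, c, 0)) - Lf (mono4 (a, b + 2, c, 0))
          - Lf (mono4 (a, b, c + 2, 0))"
      proof (rule ext)
        fix x
        obtain y1 y2 y3 y4 where y: "invstereo x = (y1, y2, y3, y4)" by (metis prod_cases4)
        have s: "y4^2 = 1 - y1^2 - y2^2 - y3^2" using inv_sphere[OF y] by simp
        have l: "Lf (\<lambda>y. coord i y * mono4 \<beta> y) x = sqrt (2 / (sqn3 x + 1)) * (y1^a * y2^b * y3^c) * y4^2"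
          by (simp add: Lf_def y b e1 coord_def 4 power2_eq_square)
        have r: "(Lf (mono4 (a, b, c, 0)) - Lf (mono4 (a + 2, b, c, 0)) - Lf (mono4 (a, b + 2, c, 0))
          - Lf (mono4 (a, b, c + 2, 0))) x = sqrt (2 / (sqn3 x + 1)) * (y1^a * y2^b * y3^c) * (1 - y1^2 - y2^2 - y3^2)"
          by (simp add: Lf_def y power_add) (simp add: algebra_simps power2_eq_square)
        show "Lf (\<lambda>y. coord i y * mono4 \<beta> y) x = (Lf (mono4 (a, b, c, 0)) - Lf (mono4 (a + 2, b, c, 0)) - Lf (mono4 (a, b + 2, c, 0))
          - Lf (mono4 (a, b, c + 2, 0))) x"
          using l r s by simp
      qed
      moreover have "(a, b, c, 0) \<in> Iset (Suc n)" "(a + 2, b, c, 0) \<in> Iset (Suc n)"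
        "(a, b + 2, c, 0) \<in> Iset (Suc n)" "(a, b, c + 2, 0) \<in> Iset (Suc n)"
        using e e1 by (auto simp: Iset_def)
      ultimately show ?thesis by (simp only:) (intro span_diff Tset_in)
    qed
  qed
qed

lemma mult_coord_span:
  assumes "i < 4" "g \<in> span (Tset n)"
  shows "(\<lambda>x. coord i (invstereo x) * g x) \<in> span (Tset (Suc n))"
  using assms(2)
proof (induction rule: span_induct_alt)
  case base
  have "(\<lambda>x. coord i (invstereo x) * (0::pt3\<Rightarrow>real) x) = 0" by (simp add: fun_eq_iff)
  then show ?case using span_zero by metis
next
  case (step c x y)
  then obtain \<beta> where \<beta>: "\<beta> \<in> Iset n" "x = Lf (mono4 \<beta>)" by (auto simp: Tset_def)
  have "(\<lambda>z. coord i (invstereo z) * x z) = Lf (\<lambda>y. coord i y * mono4 \<beta> y)"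
    by (simp add: \<beta> Lf_def fun_eq_iff)
  then have h: "(\<lambda>z. coord i (invstereo z) * x z) \<in> span (Tset (Suc n))"
    using mult_coord_base[OF assms(1) \<beta>(1)] by simp
  have "(\<lambda>z. coord i (invstereo z) * (c *\<^sub>R x + y) z) = c *\<^sub>R (\<lambda>z. coord i (invstereo z) * x z) + (\<lambda>z. coord i (invstereo z) * y z)"
    by (simp add: fun_eq_iff algebra_simps)
  then show ?case using h step.IH by (simp add: span_add span_scale)
qed

lemma polyfun_span: "polyfun n P \<Longrightarrow> Lf P \<in> span (Tset n)"
proof (induction n P rule: polyfun.induct)
  case (pconst n c)
  have "Lf (\<lambda>_. c) = c *\<^sub>R Lf (mono4 (0, 0, 0, 0))"
    by (simp add: Lf_def fun_eq_iff case_prod_unfold)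
  moreover have "(0, 0, 0, 0) \<in> Iset n" by (simp add: Iset_def)
  ultimately show ?case by (metis Tset_in span_scale)
next
  case (pmul i n f)
  have "Lf (\<lambda>y. coord i y * f y) = (\<lambda>x. coord i (invstereo x) * Lf f x)"
    by (simp add: Lf_def fun_eq_iff algebra_simps)
  then show ?case using mult_coord_span[OF pmul(1) pmul.IH] by simp
next
  case (padd n f g)
  then show ?case unfolding Lf_add by (intro span_add) auto
next
  case (pscale n f c)
  then show ?case unfolding Lf_scale by (intro span_scale) auto
next
  case (pmono n f)
  then show ?case using span_mono[OF Tset_mono[of n "Suc n"]] by auto
qed

lemma polyfun_span_le: "polyfun n P \<Longrightarrow> n \<le> N \<Longrightarrow> Lf P \<in> span (Tset N)"
  using polyfun_span span_mono[OF Tset_mono] by blast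



definition mon3 :: "nat \<times> nat \<times> nat \<Rightarrow> pt3 \<Rightarrow> real" where
  "mon3 \<beta> x = (case \<beta> of (a, b, d) \<Rightarrow> case x of (x1, x2, x3) \<Rightarrow> x1^a * x2^b * x3^d)"

definition Jset :: "nat \<Rightarrow> (nat \<times> nat \<times> nat) set" where
  "Jset k = {(a, b, d). a + b + d \<le> k}"

lemma finite_Jset: "finite (Jset k)"
proof -
  have "Jset k \<subseteq> {..k} \<times> {..k} \<times> {..k}" by (auto simp: Jset_def)
  then show ?thesis by (rule finite_subset) auto
qed

lemma mpoly3_alt: "mpoly3 k c x = (\<Sum>\<beta>\<in>Jset k. c \<beta> * mon3 \<beta> x)"
  unfolding mpoly3_def Jset_def mon3_def
  by (cases x) (simp add: split_def mult.assoc)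

lemma mpoly3_add: "mpoly3 k (\<lambda>\<beta>. c \<beta> + d \<beta>) x = mpoly3 k c x + mpoly3 k d x"
  by (simp add: mpoly3_alt sum.distrib distrib_right)

lemma mpoly3_scale: "mpoly3 k (\<lambda>\<beta>. r * c \<beta>) x = r * mpoly3 k c x"
  by (simp add: mpoly3_alt sum_distrib_left mult.assoc)

lemma mpoly3_zero: "mpoly3 k (\<lambda>\<beta>. 0) x = 0"
  by (simp add: mpoly3_alt)

lemma subspace_HN: "subspace (HN N)"
  unfolding subspace_def
proof (intro conjI ballI allI)
  show "0 \<in> HN N"
    unfolding HN_def by (auto intro!: exI[where x="\<lambda>_ _. 0"] simp: mpoly3_zero)
next
  fix f g assume "f \<in> HN N" "g \<in> HN N"
  then obtain p q where p: "\<forall>x. f x = (\<Sum>k\<le>N. mpoly3 k (p k) x / (sqn3 x + 1) powr (real k + 1/2))"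
    and q: "\<forall>x. g x = (\<Sum>k\<le>N. mpoly3 k (q k) x / (sqn3 x + 1) powr (real k + 1/2))"
    unfolding HN_def by blast
  show "f + g \<in> HN N"
    unfolding HN_def
    by (auto intro!: exI[where x="\<lambda>k \<beta>. p k \<beta> + q k \<beta>"] simp: mpoly3_add p q sum.distrib add_divide_distrib)
next
  fix c :: real and f assume "f \<in> HN N"
  then obtain p where p: "\<forall>x. f x = (\<Sum>k\<le>N. mpoly3 k (p k) x / (sqn3 x + 1) powr (real k + 1/2))"
    unfolding HN_def by blast
  show "c *\<^sub>R f \<in> HN N"
    unfolding HN_def
    by (auto intro!: exI[where x="\<lambda>k \<beta>. c * p k \<beta>"] simp: mpoly3_scale p sum_distrib_left)
qed

lemma hmon:
  assumes "a + b + d \<le> k" "k \<le> N"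
  shows "(\<lambda>x. C * mon3 (a, b, d) x / (sqn3 x + 1) powr (real k + 1/2)) \<in> HN N"
proof -
  define p where "p = (\<lambda>j. if j = k then (\<lambda>\<gamma>. if \<gamma> = (a, b, d) then C else 0) else (\<lambda>_. 0))"
  have m: "mpoly3 j (p j) x = (if j = k then C * mon3 (a, b, d) x else 0)" for j x
  proof (cases "j = k")
    case True
    have "(a, b, d) \<in> Jset k" using assms by (simp add: Jset_def)
    then show ?thesis using True finite_Jset[of k]
      by (simp add: p_def mpoly3_alt if_distrib[of "\<lambda>z. z * _"] sum.delta cong: if_cong)
  qed (simp add: p_def mpoly3_zero)
  show ?thesis
    unfolding HN_def
  proof (intro CollectI exI[where x=p] allI)
    fix x
    have "(\<Sum>j\<le>N. mpoly3 j (p j) x / (sqn3 x + 1) powr (real j + 1/2))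
        = (\<Sum>j\<le>N. if j = k then C * mon3 (a, b, d) x / (sqn3 x + 1) powr (real k + 1/2) else 0)"
      by (rule sum.cong) (auto simp: m)
    also have "\<dots> = C * mon3 (a, b, d) x / (sqn3 x + 1) powr (real k + 1/2)"
      using assms by (simp add: sum.delta)
    finally show "C * mon3 (a, b, d) x / (sqn3 x + 1) powr (real k + 1/2) =
      (\<Sum>j\<le>N. mpoly3 j (p j) x / (sqn3 x + 1) powr (real j + 1/2))" by simp
  qed
qed

lemma powr_half: "Q > 0 \<Longrightarrow> Q powr (real k + 1/2) = Q ^ k * sqrt Q"
  by (simp add: powr_add powr_realpow powr_half_sqrt)

lemma Tset_HN: "Tset N \<subseteq> HN N"
proof
  fix f assume "f \<in> Tset N"
  then obtain a b c e where abce: "e \<le> 1" "a + b + c + e \<le> N" "f = Lf (mono4 (a, b, c, e))"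
    by (auto simp: Tset_def Iset_def)
  define j where "j = a + b + c"
  have main: "Lf (mono4 (a, b, c, 0)) = (\<lambda>x. (sqrt 2 * 2^j) * mon3 (a, b, c) x / (sqn3 x + 1) powr (real j + 1/2))"
  proof (rule fun_eq3)
    fix x1 x2 x3 :: real
    define Q where "Q = x1^2 + x2^2 + x3^2 + 1"
    have Q: "Q > 0" unfolding Q_def by (simp add: add_nonneg_pos)
    have "Lf (mono4 (a, b, c, 0)) (x1, x2, x3) = sqrt 2 / sqrt Q * ((2 * x1 / Q)^a * (2 * x2 / Q)^b * (2 * x3 / Q)^c)"
      by (simp add: Lf_def invstereo_simp Q_def[symmetric] Let_def real_sqrt_divide)
    also have "\<dots> = sqrt 2 * 2^j * (x1^a * x2^b * x3^c) / (Q^j * sqrt Q)"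
      using Q by (simp add: power_divide power_mult_distrib j_def power_add field_simps)
    finally show "Lf (mono4 (a, b, c, 0)) (x1, x2, x3) = sqrt 2 * 2 ^ j * mon3 (a, b, c) (x1, x2, x3) / (sqn3 (x1, x2, x3) + 1) powr (real j + 1 / 2)"
      using Q by (simp add: powr_half mon3_def Q_def[symmetric])
  qed
  have j1: "j \<le> N" using abce j_def by simp
  have h0: "Lf (mono4 (a, b, c, 0)) \<in> HN N"
    unfolding main using hmon[of a b c j N] j1 by (simp add: j_def)
  show "f \<in> HN N"
  proof (cases "e = 0")
    case True then show ?thesis using h0 abce by simp
  next
    case False
    then have e1: "e = 1" using abce by simp
    have j2: "j + 1 \<le> N" using abce j_def e1 by simp
    have main2: "Lf (mono4 (a, b, c, 1)) = Lf (mono4 (a, b, c, 0)) +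
      (-1) *\<^sub>R (\<lambda>x. (2 * sqrt 2 * 2^j) * mon3 (a, b, c) x / (sqn3 x + 1) powr (real (j + 1) + 1/2))"
    proof (rule fun_eq3)
      fix x1 x2 x3 :: real
      define Q where "Q = x1^2 + x2^2 + x3^2 + 1"
      have Q: "Q > 0" unfolding Q_def by (simp add: add_nonneg_pos)
      have e: "(x1^2 + x2^2 + x3^2 - 1) / Q = 1 - 2 / Q" using Q by (simp add: Q_def field_simps)
      have "Lf (mono4 (a, b, c, 1)) (x1, x2, x3) = Lf (mono4 (a, b, c, 0)) (x1, x2, x3) * (1 - 2 / Q)"
        by (simp add: Lf_def invstereo_simp Q_def[symmetric] Let_def e)
      also have "\<dots> = Lf (mono4 (a, b, c, 0)) (x1, x2, x3) - 2 * (sqrt 2 * 2^j) * mon3 (a, b, c) (x1, x2, x3) / (Q^j * sqrt Q) / Q"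
      proof -
        have m0: "Lf (mono4 (a, b, c, 0)) (x1, x2, x3) = sqrt 2 * 2^j * mon3 (a, b, c) (x1, x2, x3) / (Q^j * sqrt Q)"
          using Q by (simp add: main powr_half Q_def add.commute add.left_commute)
        show ?thesis unfolding m0 using Q by (simp add: field_simps)
      qed
      also have "\<dots> = Lf (mono4 (a, b, c, 0)) (x1, x2, x3) - 2 * sqrt 2 * 2^j * mon3 (a, b, c) (x1, x2, x3) / Q powr (real (j + 1) + 1/2)"
        using Q by (simp only: powr_half) (simp add: field_simps)
      finally show "Lf (mono4 (a, b, c, 1)) (x1, x2, x3) = (Lf (mono4 (a, b, c, 0)) +
         (-1) *\<^sub>R (\<lambda>x. (2 * sqrt 2 * 2^j) * mon3 (a, b, c) x / (sqn3 x + 1) powr (real (j + 1) + 1/2))) (x1, x2, x3)"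
        by (simp add: Q_def)
    qed
    have "(\<lambda>x. (2 * sqrt 2 * 2^j) * mon3 (a, b, c) x / (sqn3 x + 1) powr (real (j + 1) + 1/2)) \<in> HN N"
      using hmon[of a b c "j+1" N "2 * sqrt 2 * 2^j"] j2 by (simp add: j_def)
    moreover have sN: "\<forall>x\<in>HN N. \<forall>y\<in>HN N. x + y \<in> HN N" "\<forall>c. \<forall>x\<in>HN N. c *\<^sub>R x \<in> HN N"
      using subspace_HN[of N] unfolding subspace_def by auto
    ultimately have "Lf (mono4 (a, b, c, 1)) \<in> HN N"
      unfolding main2 using h0 by blast
    then show ?thesis using abce e1 by simp
  qed
qed

definition Pm :: "nat \<Rightarrow> nat \<times> nat \<times> nat \<Rightarrow> pt4 \<Rightarrow> real" where
  "Pm k \<beta> y = (case \<beta> of (a, b, d) \<Rightarrow> (1 / sqrt 2) * ((coord 0 y / 2)^a * (coord 1 y / 2)^b * (coord 2 y / 2)^d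
      * ((1 - coord 3 y) / 2)^(k - (a + b + d))))"

lemma polyfun_Pm: "\<beta> \<in> Jset k \<Longrightarrow> polyfun k (Pm k \<beta>)"
proof -
  assume "\<beta> \<in> Jset k"
  then obtain a b d where \<beta>: "\<beta> = (a, b, d)" "a + b + d \<le> k" by (auto simp: Jset_def)
  have c: "polyfun 1 (\<lambda>y. coord i y / 2)" if "i < 4" for i
    using pscale[OF polyfun_coord[OF that], of "1/2"] by simp
  have c3: "polyfun 1 (\<lambda>y. (1 - coord 3 y) / 2)"
    using polyfun_diff[OF pconst[of 1 "1/2"] c[of 3]] by (simp add: diff_divide_distrib)
  have "polyfun (((a + b) + d) + (k - (a + b + d))) (\<lambda>y. (((coord 0 y / 2)^a * (coord 1 y / 2)^b) * (coord 2 y / 2)^d)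
      * ((1 - coord 3 y) / 2)^(k - (a + b + d)))"
    by (intro polyfun_mult polyfun_pow c c3) auto
  then have "polyfun k (\<lambda>y. (((coord 0 y / 2)^a * (coord 1 y / 2)^b) * (coord 2 y / 2)^d)
      * ((1 - coord 3 y) / 2)^(k - (a + b + d)))" using \<beta> by simp
  from pscale[OF this, of "1 / sqrt 2"]
  have "polyfun k (\<lambda>y. 1 / sqrt 2 * ((((coord 0 y / 2)^a * (coord 1 y / 2)^b) * (coord 2 y / 2)^d)
      * ((1 - coord 3 y) / 2)^(k - (a + b + d))))" .
  moreover have "Pm k \<beta> = (\<lambda>y. 1 / sqrt 2 * ((((coord 0 y / 2)^a * (coord 1 y / 2)^b) * (coord 2 y / 2)^d)
      * ((1 - coord 3 y) / 2)^(k - (a + b + d))))"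
    by (rule ext) (simp only: Pm_def \<beta> prod.case mult.assoc)
  ultimately show ?thesis by simp
qed

lemma Lf_Pm: "\<beta> \<in> Jset k \<Longrightarrow> Lf (Pm k \<beta>) = (\<lambda>x. mon3 \<beta> x / (sqn3 x + 1) powr (real k + 1/2))"
proof (rule fun_eq3)
  fix x1 x2 x3 :: real
  assume "\<beta> \<in> Jset k"
  then obtain a b d where \<beta>: "\<beta> = (a, b, d)" "a + b + d \<le> k" by (auto simp: Jset_def)
  define Q where "Q = x1^2 + x2^2 + x3^2 + 1"
  have Q: "Q > 0" unfolding Q_def by (simp add: add_nonneg_pos)
  have e: "(1 - (x1^2 + x2^2 + x3^2 - 1) / Q) / 2 = 1 / Q" using Q by (simp add: Q_def field_simps)
  have "Lf (Pm k \<beta>) (x1, x2, x3) = sqrt 2 / sqrt Q * ((1 / sqrt 2) * ((x1 / Q)^a * (x2 / Q)^b * (x3 / Q)^d * (1 / Q)^(k - (a + b + d))))"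
    by (simp add: Lf_def invstereo_simp Q_def[symmetric] Let_def real_sqrt_divide Pm_def \<beta> coord_def e)
  also have "\<dots> = (x1^a * x2^b * x3^d) / (Q^(a + b + d) * Q^(k - (a + b + d)) * sqrt Q)"
    using Q by (simp add: power_divide power_add field_simps)
  also have "Q^(a + b + d) * Q^(k - (a + b + d)) = Q^k" using \<beta> by (simp add: power_add[symmetric])
  finally show "Lf (Pm k \<beta>) (x1, x2, x3) = mon3 \<beta> (x1, x2, x3) / (sqn3 (x1, x2, x3) + 1) powr (real k + 1 / 2)"
    using Q by (simp add: powr_half mon3_def \<beta> Q_def[symmetric])
qed

lemma HN_span: "HN N \<subseteq> span (Tset N)"
proof
  fix v assume "v \<in> HN N"
  then obtain p where p: "\<forall>x. v x = (\<Sum>k\<le>N. mpoly3 k (p k) x / (sqn3 x + 1) powr (real k + 1/2))"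
    unfolding HN_def by blast
  have "v = (\<Sum>k\<le>N. \<Sum>\<beta>\<in>Jset k. p k \<beta> *\<^sub>R Lf (Pm k \<beta>))"
  proof (rule ext)
    fix x
    show "v x = (\<Sum>k\<le>N. \<Sum>\<beta>\<in>Jset k. p k \<beta> *\<^sub>R Lf (Pm k \<beta>)) x"
      by (simp add: p sum_fun_apply Lf_Pm mpoly3_alt sum_divide_distrib cong: sum.cong)
  qed
  also have "\<dots> \<in> span (Tset N)"
    by (intro span_sum span_scale polyfun_span_le[OF polyfun_Pm]) auto
  finally show "v \<in> span (Tset N)" .
qed

lemma HN_eq_span': "HN N = span (Tset N)"
  using HN_span span_minimal[OF Tset_HN subspace_HN] by blast



lemma pderiv_iter_Suc: "(pderiv ^^ Suc r) p = pderiv ((pderiv ^^ r) p)"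
  by simp

lemma degree_pderiv_iter: "degree ((pderiv ^^ r) (p :: real poly)) = degree p - r"
  by (induction r) (auto simp: degree_pderiv)

lemma pderiv_iter_nonzero: "(p :: real poly) \<noteq> 0 \<Longrightarrow> r \<le> degree p \<Longrightarrow> (pderiv ^^ r) p \<noteq> 0"
proof (induction r)
  case 0 then show ?case by simp
next
  case (Suc r)
  have "degree ((pderiv ^^ r) p) \<noteq> 0" using Suc.prems by (simp add: degree_pderiv_iter)
  then show ?case by (simp add: pderiv_eq_0_iff)
qed

lemma cheb_props: "degree (cheb n) \<le> n \<and> coeff (cheb n) n = (if n = 0 then 1 else 2 ^ (n - 1))"
proof (induction n rule: cheb.induct)
  case 1 then show ?case by simp
next
  case 2 then show ?case by simp
next
  case (3 n)
  have e: "[:0, 2:] * cheb (Suc n) = pCons 0 (smult 2 (cheb (Suc n)))" by simp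
  have d1: "degree ([:0, 2:] * cheb (Suc n)) \<le> Suc (Suc n)"
    unfolding e using 3 by (cases "cheb (Suc n) = 0") auto
  have d2: "degree (cheb n) \<le> Suc (Suc n)" using 3 by simp
  have "degree (cheb (Suc (Suc n))) \<le> Suc (Suc n)"
    using degree_diff_le[OF d1 d2] by simp
  moreover have "coeff (cheb n) (Suc (Suc n)) = 0" using 3 by (intro coeff_eq_0) simp
  ultimately show ?case using 3 unfolding cheb.simps by (simp add: e)
qed

lemma cheb_degree: "degree (cheb n) = n"
  using cheb_props[of n] le_degree[of "cheb n" n] by (simp split: if_splits)

lemma cheb_nonzero: "cheb n \<noteq> 0"
  using cheb_props[of n] by (auto split: if_splits)

definition par :: "nat \<Rightarrow> real poly \<Rightarrow> bool" where
  "par r p \<longleftrightarrow> (\<forall>j. odd (j + r) \<longrightarrow> coeff p j = 0)"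

lemma par_mult: "par 0 p \<Longrightarrow> par 0 q \<Longrightarrow> par 0 (p * q)"
proof -
  assume p: "par 0 p" and q: "par 0 q"
  show "par 0 (p * q)"
    unfolding par_def
  proof (intro allI impI)
    fix j :: nat assume j: "odd (j + 0)"
    have "(\<Sum>i\<le>j. coeff p i * coeff q (j - i)) = 0"
    proof (rule sum.neutral, rule ballI)
      fix i assume i: "i \<in> {..j}"
      show "coeff p i * coeff q (j - i) = 0"
      proof (cases "odd i")
        case True then show ?thesis using p by (simp add: par_def)
      next
        case False
        then have "odd (j - i)" using j i by auto
        then show ?thesis using q by (simp add: par_def)
      qed
    qed
    then show "coeff (p * q) j = 0" by (simp add: coeff_mult)
  qed
qed

lemma par_one: "par 0 1"
  by (auto simp: par_def coeff_1 elim: oddE)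

lemma par_pow: "par 0 p \<Longrightarrow> par 0 (p ^ n)"
  by (induction n) (auto intro: par_mult par_one)

lemma par_pderiv: "par r p \<Longrightarrow> par (Suc r) (pderiv p)"
  unfolding par_def by (auto simp: coeff_pderiv)

lemma par_pderiv_iter: "par 0 p \<Longrightarrow> par r ((pderiv ^^ r) p)"
  by (induction r) (auto intro: par_pderiv)

definition Dpoly :: "nat \<Rightarrow> nat \<Rightarrow> real poly" where
  "Dpoly l \<mu> = (pderiv ^^ (l + \<mu>)) ([:-1, 0, 1:] ^ l)"

lemma Dpoly_degree: "degree (Dpoly l \<mu>) = 2 * l - (l + \<mu>)"
  by (simp add: Dpoly_def degree_pderiv_iter degree_power_eq)

lemma Dpoly_nonzero: "\<mu> \<le> l \<Longrightarrow> Dpoly l \<mu> \<noteq> 0"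
  unfolding Dpoly_def by (rule pderiv_iter_nonzero) (auto simp: degree_power_eq)

lemma Dpoly_par: "par (l + \<mu>) (Dpoly l \<mu>)"
  unfolding Dpoly_def
  by (rule par_pderiv_iter, rule par_pow) (auto simp: par_def coeff_pCons split: nat.splits)



lemma polyfun_poly: "polyfun 1 h \<Longrightarrow> polyfun (degree p) (\<lambda>y. poly p (h y))"
proof (induction p)
  case 0 then show ?case using pconst[of 0 0] by simp
next
  case (pCons a p)
  show ?case
  proof (cases "p = 0")
    case True then show ?thesis using pconst[of 0 a] by simp
  next
    case False
    have "polyfun (1 + degree p) (\<lambda>y. h y * poly p (h y))"
      by (rule polyfun_mult[OF pCons.prems pCons.IH[OF pCons.prems]])
    moreover have "polyfun (1 + degree p) (\<lambda>y. a)" by (rule pconst)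
    ultimately have "polyfun (1 + degree p) (\<lambda>y. a + h y * poly p (h y))" using padd by blast
    then show ?thesis using False by simp
  qed
qed

lemma polyfun_pow_gen: "polyfun d h \<Longrightarrow> polyfun (d * n) (\<lambda>y. h y ^ n)"
proof (induction n)
  case 0 then show ?case using pconst[of 0 1] by simp
next
  case (Suc n)
  then show ?case using polyfun_mult[OF Suc.prems Suc.IH[OF Suc.prems]] by (simp add: add.commute)
qed

lemma coord_sph3[simp]:
  "coord 0 (sph3 \<phi> \<theta> \<chi>) = sin \<theta> * cos \<phi> * sin \<chi>"
  "coord 1 (sph3 \<phi> \<theta> \<chi>) = sin \<theta> * sin \<phi> * sin \<chi>"
  "coord 2 (sph3 \<phi> \<theta> \<chi>) = cos \<theta> * sin \<chi>"
  "coord 3 (sph3 \<phi> \<theta> \<chi>) = cos \<chi>"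
  "coord (Suc 0) (sph3 \<phi> \<theta> \<chi>) = sin \<theta> * sin \<phi> * sin \<chi>"
  by (simp_all add: coord_def sph3_def)

lemma polyfun_coord'[intro]: "polyfun (Suc 0) (coord 3)" "polyfun (Suc 0) (coord 2)"
   "polyfun (Suc 0) (coord 1)" "polyfun (Suc 0) (coord 0)"
  using polyfun_coord[of 3] polyfun_coord[of 2] polyfun_coord[of 1] polyfun_coord[of 0] by auto

lemma F1: "\<exists>P. polyfun (k - l) P \<and> (\<forall>\<phi> \<theta> \<chi>. P (sph3 \<phi> \<theta> \<chi>) = chebD (k + 1) (l + 1) (cos \<chi>))"
proof -
  have "polyfun (degree ((pderiv ^^ (l + 1)) (cheb (k + 1)))) (\<lambda>y. poly ((pderiv ^^ (l + 1)) (cheb (k + 1))) (coord 3 y))"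
    by (rule polyfun_poly[OF polyfun_coord]) simp
  moreover have "degree ((pderiv ^^ (l + 1)) (cheb (k + 1))) = k - l"
    by (subst degree_pderiv_iter) (simp add: cheb_degree)
  ultimately show ?thesis by (intro exI[of _ "\<lambda>y. poly ((pderiv ^^ (l + 1)) (cheb (k + 1))) (coord 3 y)"])
     (auto simp: chebD_def)
qed

lemma poly_sum_le: "degree (p :: real poly) \<le> n \<Longrightarrow> poly p x = (\<Sum>j\<le>n. coeff p j * x ^ j)"
  by (subst poly_altdef) (rule sum.mono_neutral_left, auto simp: coeff_eq_0)

lemma F2:
  assumes par: "\<forall>j. odd (j + n) \<longrightarrow> coeff D j = 0" and deg: "degree D \<le> n"
  shows "\<exists>P. polyfun n P \<and> (\<forall>\<phi> \<theta> \<chi>. P (sph3 \<phi> \<theta> \<chi>) = sin \<chi> ^ n * poly D (cos \<theta>))"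
proof -
  define P where "P = (\<lambda>y. \<Sum>j\<le>n. coeff D j * (coord 2 y ^ j * (1 - coord 3 y ^ 2) ^ ((n - j) div 2)))"
  have h2: "polyfun 2 (\<lambda>y. 1 - coord 3 y ^ 2)"
  proof -
    have "polyfun (1 + 1) (\<lambda>y. coord 3 y * coord 3 y)" by (rule polyfun_mult) (auto intro: polyfun_coord)
    then have "polyfun 2 (\<lambda>y. coord 3 y ^ 2)" by (simp add: power2_eq_square numeral_2_eq_2)
    then show ?thesis using polyfun_diff[OF pconst[of 2 1]] by blast
  qed
  have "polyfun n P"
    unfolding P_def
  proof (rule polyfun_sum, simp, rule pscale)
    fix j assume j: "j \<in> {..n}"
    have "polyfun (1 * j + 2 * ((n - j) div 2)) (\<lambda>y. coord 2 y ^ j * (1 - coord 3 y ^ 2) ^ ((n - j) div 2))"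
      by (intro polyfun_mult polyfun_pow_gen h2 polyfun_coord) simp
    moreover have "1 * j + 2 * ((n - j) div 2) \<le> n" using j by auto
    ultimately show "polyfun n (\<lambda>y. coord 2 y ^ j * (1 - coord 3 y ^ 2) ^ ((n - j) div 2))"
      by (rule polyfun_mono_le)
  qed
  moreover have "P (sph3 \<phi> \<theta> \<chi>) = sin \<chi> ^ n * poly D (cos \<theta>)" for \<phi> \<theta> \<chi>
  proof -
    have "P (sph3 \<phi> \<theta> \<chi>) = (\<Sum>j\<le>n. sin \<chi> ^ n * (coeff D j * cos \<theta> ^ j))"
      unfolding P_def
    proof (rule sum.cong, simp)
      fix j assume j: "j \<in> {..n}"
      show "coeff D j * (coord 2 (sph3 \<phi> \<theta> \<chi>) ^ j * (1 - coord 3 (sph3 \<phi> \<theta> \<chi>) ^ 2) ^ ((n - j) div 2))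
         = sin \<chi> ^ n * (coeff D j * cos \<theta> ^ j)"
      proof (cases "coeff D j = 0")
        case True then show ?thesis by simp
      next
        case False
        then have "even (j + n)" using par by blast
        then have ev: "n - j = 2 * ((n - j) div 2)" using j by auto
        have "(1 - cos \<chi> ^ 2) ^ ((n - j) div 2) = sin \<chi> ^ (n - j)"
          by (subst ev) (simp add: sin_squared_eq[symmetric] power_mult)
        moreover have "sin \<chi> ^ j * sin \<chi> ^ (n - j) = sin \<chi> ^ n"
          using j by (simp add: power_add[symmetric])
        ultimately show ?thesis by (simp add: power_mult_distrib algebra_simps)
      qed
    qed
    also have "\<dots> = sin \<chi> ^ n * poly D (cos \<theta>)"
      by (simp add: poly_sum_le[OF deg] sum_distrib_left)
    finally show ?thesis .
  qed
  ultimately show ?thesis by blast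
qed

lemma ReIm_polyfun: "polyfun n (\<lambda>y. Re (Complex (coord 0 y) (coord 1 y) ^ n)) \<and>
   polyfun n (\<lambda>y. Im (Complex (coord 0 y) (coord 1 y) ^ n))"
proof (induction n)
  case 0 then show ?case using pconst[of 0 1] pconst[of 0 0] by simp
next
  case (Suc n)
  have a: "polyfun (Suc n) (\<lambda>y. coord 0 y * Re (Complex (coord 0 y) (coord 1 y) ^ n))"
    "polyfun (Suc n) (\<lambda>y. coord 1 y * Im (Complex (coord 0 y) (coord 1 y) ^ n))"
    "polyfun (Suc n) (\<lambda>y. coord 0 y * Im (Complex (coord 0 y) (coord 1 y) ^ n))"
    "polyfun (Suc n) (\<lambda>y. coord 1 y * Re (Complex (coord 0 y) (coord 1 y) ^ n))"
    using Suc by (auto intro: pmul)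
  show ?case using polyfun_diff[OF a(1) a(2)] padd[OF a(3) a(4)] by simp
qed

lemma F3: "\<exists>P. polyfun (nat \<bar>m\<bar>) P \<and> (\<forall>\<phi> \<theta> \<chi>. P (sph3 \<phi> \<theta> \<chi>) = (sin \<theta> * sin \<chi>) ^ nat \<bar>m\<bar> * ytrig m \<phi>)"
proof -
  define \<mu> where "\<mu> = nat \<bar>m\<bar>"
  define Z where "Z = (\<lambda>y. Complex (coord 0 y) (coord 1 y) ^ \<mu>)"
  have cp: "Z (sph3 \<phi> \<theta> \<chi>) = complex_of_real ((sin \<theta> * sin \<chi>) ^ \<mu>) * cis (real \<mu> * \<phi>)" for \<phi> \<theta> \<chi>
  proof -
    have "Complex (coord 0 (sph3 \<phi> \<theta> \<chi>)) (coord 1 (sph3 \<phi> \<theta> \<chi>)) = complex_of_real (sin \<theta> * sin \<chi>) * cis \<phi>"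
      by (simp add: complex_eq_iff)
    then show ?thesis unfolding Z_def by (simp add: power_mult_distrib DeMoivre)
  qed
  have re: "Re (Z (sph3 \<phi> \<theta> \<chi>)) = (sin \<theta> * sin \<chi>) ^ \<mu> * cos (real \<mu> * \<phi>)" for \<phi> \<theta> \<chi>
    unfolding cp by simp
  have im: "Im (Z (sph3 \<phi> \<theta> \<chi>)) = (sin \<theta> * sin \<chi>) ^ \<mu> * sin (real \<mu> * \<phi>)" for \<phi> \<theta> \<chi>
    unfolding cp by simp
  have pre: "polyfun \<mu> (\<lambda>y. Re (Z y))" and pim: "polyfun \<mu> (\<lambda>y. Im (Z y))"
    using ReIm_polyfun[of \<mu>] unfolding Z_def by auto
  consider "m \<ge> 1" | "m = 0" | "m \<le> -1" by linarith
  then have "\<exists>P. polyfun \<mu> P \<and> (\<forall>\<phi> \<theta> \<chi>. P (sph3 \<phi> \<theta> \<chi>) = (sin \<theta> * sin \<chi>) ^ \<mu> * ytrig m \<phi>)"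
  proof cases
    case 1
    then have "real_of_int m = real \<mu>" by (simp add: \<mu>_def)
    then show ?thesis using pre 1
      by (intro exI[of _ "\<lambda>y. Re (Z y)"]) (auto simp: re ytrig_def)
  next
    case 2
    then show ?thesis by (intro exI[of _ "\<lambda>y. 1 / sqrt 2"]) (auto simp: ytrig_def \<mu>_def intro: pconst)
  next
    case 3
    then have "real_of_int \<bar>m\<bar> = real \<mu>" by (simp add: \<mu>_def)
    then show ?thesis using pim 3
      by (intro exI[of _ "\<lambda>y. Im (Z y)"]) (auto simp: im ytrig_def)
  qed
  then show ?thesis unfolding \<mu>_def .
qed



lemma Yang_poly:
  assumes "l \<le> k" "nat \<bar>m\<bar> \<le> l"
  shows "\<exists>P. polyfun k P \<and> (\<forall>\<phi> \<theta> \<chi>. 0 \<le> \<theta> \<longrightarrow> \<theta> \<le> pi \<longrightarrow> Yang (k, l, m) \<phi> \<theta> \<chi> = P (sph3 \<phi> \<theta> \<chi>))"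
proof -
  define \<mu> where "\<mu> = nat \<bar>m\<bar>"
  define n where "n = l - \<mu>"
  have \<mu>l: "\<mu> \<le> l" using assms by (simp add: \<mu>_def)
  obtain P1 where P1: "polyfun (k - l) P1" "\<And>\<phi> \<theta> \<chi>. P1 (sph3 \<phi> \<theta> \<chi>) = chebD (k + 1) (l + 1) (cos \<chi>)"
    using F1[of k l] by blast
  have par: "\<forall>j. odd (j + n) \<longrightarrow> coeff (Dpoly l \<mu>) j = 0"
  proof (intro allI impI)
    fix j assume "odd (j + n)"
    then have "odd (j + (l + \<mu>))" using \<mu>l by (auto simp: n_def)
    then show "coeff (Dpoly l \<mu>) j = 0" using Dpoly_par[of l \<mu>] by (simp add: par_def)
  qed
  have deg: "degree (Dpoly l \<mu>) \<le> n" by (simp add: Dpoly_degree n_def)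
  obtain P2 where P2: "polyfun n P2" "\<And>\<phi> \<theta> \<chi>. P2 (sph3 \<phi> \<theta> \<chi>) = sin \<chi> ^ n * poly (Dpoly l \<mu>) (cos \<theta>)"
    using F2[OF par deg] by blast
  obtain P3 where P3: "polyfun \<mu> P3" "\<And>\<phi> \<theta> \<chi>. P3 (sph3 \<phi> \<theta> \<chi>) = (sin \<theta> * sin \<chi>) ^ \<mu> * ytrig m \<phi>"
    using F3[of m] unfolding \<mu>_def by blast
  define C where "C = acoef k l powr (-1/2) * sqrt ((2 * real l + 1) / (2 * pi)) *
     ((-1)^\<mu> * sqrt (fact (l - \<mu>) / fact (l + \<mu>))) * ((-1)^\<mu> / (2^l * fact l))"
  define P where "P = (\<lambda>y. C * (P1 y * (P2 y * P3 y)))"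
  have "polyfun ((k - l) + (n + \<mu>)) (\<lambda>y. P1 y * (P2 y * P3 y))"
    by (intro polyfun_mult P1 P2 P3)
  moreover have "(k - l) + (n + \<mu>) = k" using assms \<mu>l by (simp add: n_def)
  ultimately have "polyfun k P" unfolding P_def using pscale by simp
  moreover have "Yang (k, l, m) \<phi> \<theta> \<chi> = P (sph3 \<phi> \<theta> \<chi>)" if th: "0 \<le> \<theta>" "\<theta> \<le> pi" for \<phi> \<theta> \<chi>
  proof -
    have s: "sqrt (1 - cos \<theta> ^ 2) = sin \<theta>"
      using sin_ge_zero[OF th] by (simp add: sin_squared_eq[symmetric])
    have sl: "sin \<chi> ^ l = sin \<chi> ^ n * sin \<chi> ^ \<mu>" using \<mu>l by (simp add: n_def power_add[symmetric])
    have "Yang (k, l, m) \<phi> \<theta> \<chi> = acoef k l powr (-1/2) * sin \<chi> ^ l * chebD (k + 1) (l + 1) (cos \<chi>) *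
       (sqrt ((2 * real l + 1) / (2 * pi)) * ((-1)^\<mu> * sqrt (fact (l - \<mu>) / fact (l + \<mu>)) *
        ((-1)^\<mu> / (2^l * fact l) * sin \<theta> ^ \<mu> * poly (Dpoly l \<mu>) (cos \<theta>))) * ytrig m \<phi>)"
      by (simp add: Yang_def Ysph_def assocK_def assocP_def Dpoly_def s \<mu>_def)
    also have "\<dots> = P (sph3 \<phi> \<theta> \<chi>)"
      unfolding P_def P1 P2 P3 C_def sl by (simp add: power_mult_distrib algebra_simps)
    finally show ?thesis .
  qed
  ultimately show ?thesis by blast
qed

lemma sphere_angles:
  assumes "y1^2 + y2^2 + y3^2 + y4^2 = 1"
  shows "\<exists>a. angle_ok a \<and> (y1, y2, y3, y4) = (case a of (\<phi>, \<theta>, \<chi>) \<Rightarrow> sph3 \<phi> \<theta> \<chi>)"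
proof -
  have y4: "y4^2 \<le> 1" using assms zero_le_power2[of y1] zero_le_power2[of y2] zero_le_power2[of y3] by linarith
  then have "\<bar>y4\<bar> \<le> 1" using abs_le_square_iff[of y4 1] by simp
  then have y4b: "-1 \<le> y4" "y4 \<le> 1" by auto
  define \<chi> where "\<chi> = arccos y4"
  have c: "cos \<chi> = y4" using y4b by (simp add: \<chi>_def)
  have \<chi>b: "0 \<le> \<chi>" "\<chi> \<le> pi" using arccos_bounded[OF y4b] by (auto simp: \<chi>_def)
  define s where "s = sin \<chi>"
  have s0: "s \<ge> 0" using sin_ge_zero[OF \<chi>b] by (simp add: s_def)
  have ss: "s^2 = y1^2 + y2^2 + y3^2" using assms c by (simp add: s_def sin_squared_eq)
  show ?thesis
  proof (cases "s = 0")
    case True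
    then have "y1 = 0" "y2 = 0" "y3 = 0" using ss by (auto simp: add_nonneg_eq_0_iff)
    then show ?thesis using True \<chi>b c
      by (intro exI[of _ "(0, 0, \<chi>)"]) (auto simp: angle_ok_def sph3_def s_def)
  next
    case False
    then have sp: "s > 0" using s0 by simp
    have y3b: "\<bar>y3 / s\<bar> \<le> 1"
    proof -
      have "y3^2 \<le> s^2" using ss zero_le_power2[of y1] zero_le_power2[of y2] by linarith
      then have "\<bar>y3\<bar> \<le> \<bar>s\<bar>" using abs_le_square_iff[of y3 s] by simp
      then have "\<bar>y3\<bar> \<le> s" using sp by simp
      moreover have "\<bar>y3 / s\<bar> = \<bar>y3\<bar> / s" using sp by (simp add: abs_divide)
      ultimately show ?thesis using sp by (simp add: divide_le_eq_1)
    qed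
    define \<theta> where "\<theta> = arccos (y3 / s)"
    have y3c: "-1 \<le> y3 / s" "y3 / s \<le> 1" using y3b abs_le_iff[of "y3 / s" 1] by linarith+
    have ct: "cos \<theta> = y3 / s" using cos_arccos[OF y3c] by (simp add: \<theta>_def)
    have \<theta>b: "0 \<le> \<theta>" "\<theta> \<le> pi" using arccos_bounded[OF y3c] by (auto simp: \<theta>_def)
    define r where "r = sin \<theta> * s"
    have r0: "r \<ge> 0" using sin_ge_zero[OF \<theta>b] s0 by (simp add: r_def)
    have rr: "r^2 = y1^2 + y2^2"
    proof -
      have "r^2 = (1 - cos \<theta> ^ 2) * s^2" by (simp add: r_def power_mult_distrib sin_squared_eq)
      also have "\<dots> = s^2 - y3^2" using sp by (simp add: ct power_divide field_simps)
      finally show ?thesis using ss by simp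
    qed
    show ?thesis
    proof (cases "r = 0")
      case True
      then have "y1 = 0" "y2 = 0" using rr by (auto simp: add_nonneg_eq_0_iff)
      moreover have "cos \<theta> * sin \<chi> = y3" using sp by (simp add: ct s_def[symmetric])
      moreover have "sin \<theta> * sin \<chi> = 0" using True by (simp add: r_def s_def)
      ultimately show ?thesis using \<chi>b \<theta>b c
        by (intro exI[of _ "(0, \<theta>, \<chi>)"]) (simp add: angle_ok_def sph3_def)
    next
      case False
      then have rp: "r > 0" using r0 by simp
      have nz: "y1^2 + y2^2 \<noteq> 0" using rr rp by (metis power_not_zero less_irrefl)
      have "(y1 / r)^2 + (y2 / r)^2 = 1" using nz by (simp add: power_divide add_divide_distrib[symmetric] rr)
      then obtain \<phi> where \<phi>: "0 \<le> \<phi>" "\<phi> < 2 * pi" "y1 / r = cos \<phi>" "y2 / r = sin \<phi>"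
        by (rule sincos_total_2pi)
      have q1: "y1 = r * cos \<phi>" using \<phi>(3) rp by (simp add: field_simps)
      have q2: "y2 = r * sin \<phi>" using \<phi>(4) rp by (simp add: field_simps)
      have e1: "sin \<theta> * cos \<phi> * sin \<chi> = y1" unfolding q1 r_def s_def by simp
      have e2: "sin \<theta> * sin \<phi> * sin \<chi> = y2" unfolding q2 r_def s_def by simp
      have e3: "cos \<theta> * sin \<chi> = y3" using sp by (simp add: ct s_def[symmetric])
      show ?thesis using \<phi> \<chi>b \<theta>b c e1 e2 e3
        by (intro exI[of _ "(\<phi>, \<theta>, \<chi>)"]) (auto simp: angle_ok_def sph3_def)
    qed
  qed
qed

lemma Ycal_poly:
  assumes P: "\<forall>\<phi> \<theta> \<chi>. 0 \<le> \<theta> \<longrightarrow> \<theta> \<le> pi \<longrightarrow> Yang \<alpha> \<phi> \<theta> \<chi> = P (sph3 \<phi> \<theta> \<chi>)"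
    and y: "y1^2 + y2^2 + y3^2 + y4^2 = 1"
  shows "Ycal \<alpha> (y1, y2, y3, y4) = P (y1, y2, y3, y4)"
proof -
  let ?Q = "\<lambda>a. angle_ok a \<and> (y1, y2, y3, y4) = (case a of (\<phi>, \<theta>, \<chi>) \<Rightarrow> sph3 \<phi> \<theta> \<chi>)"
  have "?Q (SOME a. ?Q a)" using sphere_angles[OF y] by (rule someI_ex)
  moreover obtain \<phi> \<theta> \<chi> where a: "(SOME a. ?Q a) = (\<phi>, \<theta>, \<chi>)" by (cases "SOME a. ?Q a") auto
  ultimately have ok: "angle_ok (\<phi>, \<theta>, \<chi>)" "(y1, y2, y3, y4) = sph3 \<phi> \<theta> \<chi>" by auto
  have "Ycal \<alpha> (y1, y2, y3, y4) = Yang \<alpha> \<phi> \<theta> \<chi>"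
    unfolding Ycal_def a by simp
  also have "\<dots> = P (sph3 \<phi> \<theta> \<chi>)" using P ok(1) by (simp add: angle_ok_def)
  finally show ?thesis using ok(2) by simp
qed

lemma W_in_span': "\<alpha> \<in> LambdaStar N \<Longrightarrow> Wfun \<alpha> \<in> span (Tset N)"
proof -
  assume "\<alpha> \<in> LambdaStar N"
  then obtain k l m where \<alpha>: "\<alpha> = (k, l, m)" "l \<le> k" "k \<le> N" "- int l \<le> m" "m \<le> int l"
    by (auto simp: LambdaStar_eq)
  then have "nat \<bar>m\<bar> \<le> l" by simp
  then obtain P where P: "polyfun k P" "\<forall>\<phi> \<theta> \<chi>. 0 \<le> \<theta> \<longrightarrow> \<theta> \<le> pi \<longrightarrow> Yang \<alpha> \<phi> \<theta> \<chi> = P (sph3 \<phi> \<theta> \<chi>)"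
    using Yang_poly[OF \<alpha>(2)] \<alpha>(1) by blast
  have "Wfun \<alpha> = Lf P"
  proof
    fix x
    obtain y1 y2 y3 y4 where y: "invstereo x = (y1, y2, y3, y4)" by (cases "invstereo x") auto
    show "Wfun \<alpha> x = Lf P x"
      using Ycal_poly[OF P(2) inv_sphere[OF y]] by (simp add: Wfun_def Lf_def y)
  qed
  then show ?thesis using polyfun_span_le[OF P(1) \<alpha>(3)] by simp
qed



fun chebU :: "nat \<Rightarrow> real poly" where
  "chebU 0 = 1"
| "chebU (Suc 0) = [:0, 2:]"
| "chebU (Suc (Suc n)) = [:0, 2:] * chebU (Suc n) - chebU n"

lemma chebU_props: "degree (chebU n) \<le> n \<and> coeff (chebU n) n = 2 ^ n"
proof (induction n rule: chebU.induct)
  case 1 then show ?case by simp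
next
  case 2 then show ?case by simp
next
  case (3 n)
  have e: "[:0, 2:] * chebU (Suc n) = pCons 0 (smult 2 (chebU (Suc n)))" by simp
  have d1: "degree ([:0, 2:] * chebU (Suc n)) \<le> Suc (Suc n)"
    unfolding e using 3 by (cases "chebU (Suc n) = 0") auto
  have d2: "degree (chebU n) \<le> Suc (Suc n)" using 3 by simp
  have "degree (chebU (Suc (Suc n))) \<le> Suc (Suc n)"
    using degree_diff_le[OF d1 d2] by simp
  moreover have "coeff (chebU n) (Suc (Suc n)) = 0" using 3 by (intro coeff_eq_0) simp
  ultimately show ?case using 3 unfolding chebU.simps by (simp add: e)
qed

lemma chebU_degree: "degree (chebU n) = n"
  using chebU_props[of n] le_degree[of "chebU n" n] by simp

lemma chebU_nonzero: "chebU n \<noteq> 0"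
  using chebU_props[of n] by auto

lemma cos_cheb: "cos (real n * x) = poly (cheb n) (cos x)"
proof (induction n rule: cheb.induct)
  case 1 then show ?case by simp
next
  case 2 then show ?case by simp
next
  case (3 n)
  have "cos (real (Suc (Suc n)) * x) = 2 * cos x * cos (real (Suc n) * x) - cos (real n * x)"
  proof -
    have a: "real (Suc (Suc n)) * x = real (Suc n) * x + x" by (simp add: algebra_simps)
    have b: "real n * x = real (Suc n) * x - x" by (simp add: algebra_simps)
    show ?thesis unfolding a b by (simp add: cos_add cos_diff)
  qed
  then show ?case using 3 by simp
qed

lemma sin_chebU: "sin (real (Suc n) * x) = sin x * poly (chebU n) (cos x)"
proof (induction n rule: chebU.induct)
  case 1 then show ?case by simp
next
  case 2
  have "real (Suc (Suc 0)) * x = x + x" by simp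
  then show ?case by (simp only: sin_add) simp
next
  case (3 n)
  have "sin (real (Suc (Suc (Suc n))) * x) = 2 * cos x * sin (real (Suc (Suc n)) * x) - sin (real (Suc n) * x)"
  proof -
    have a: "real (Suc (Suc (Suc n))) * x = real (Suc (Suc n)) * x + x" by (simp add: algebra_simps)
    have b: "real (Suc n) * x = real (Suc (Suc n)) * x - x" by (simp add: algebra_simps)
    show ?thesis unfolding a b by (simp add: sin_add sin_diff)
  qed
  then show ?case using 3 by (simp add: algebra_simps)
qed

lemma deg_indep:
  fixes q :: "'k \<Rightarrow> real poly"
  assumes fin: "finite K" and nz: "\<forall>k\<in>K. q k \<noteq> 0" and inj: "inj_on (\<lambda>k. degree (q k)) K"
    and z: "\<forall>t. -1 < t \<and> t < 1 \<longrightarrow> (\<Sum>k\<in>K. e k * poly (q k) t) = 0"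
  shows "\<forall>k\<in>K. e k = 0"
proof (rule ccontr)
  assume "\<not> (\<forall>k\<in>K. e k = 0)"
  define K' where "K' = {k\<in>K. e k \<noteq> 0}"
  have K'ne: "K' \<noteq> {}" and finK': "finite K'" using \<open>\<not> _\<close> fin by (auto simp: K'_def)
  define R where "R = (\<Sum>k\<in>K. smult (e k) (q k))"
  have pR: "poly R t = (\<Sum>k\<in>K. e k * poly (q k) t)" for t
    by (simp add: R_def poly_sum)
  have R0: "R = 0"
  proof (rule ccontr)
    assume "R \<noteq> 0"
    then have "finite {x. poly R x = 0}" by (rule poly_roots_finite)
    moreover have "{-1<..<(1::real)} \<subseteq> {x. poly R x = 0}" using z pR by auto
    ultimately have "finite {-1<..<(1::real)}" by (rule finite_subset[rotated])
    then show False using infinite_Ioo[of "-1::real" 1] by simp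
  qed
  define d0 where "d0 = Max ((\<lambda>k. degree (q k)) ` K')"
  have "d0 \<in> (\<lambda>k. degree (q k)) ` K'" unfolding d0_def using K'ne finK' by (intro Max_in) auto
  then obtain k0 where k0: "k0 \<in> K'" "degree (q k0) = d0" by auto
  have le: "degree (q k) \<le> d0" if "k \<in> K'" for k
    unfolding d0_def using that finK' by (intro Max_ge) auto
  have "coeff R d0 = (\<Sum>k\<in>K. e k * coeff (q k) d0)" by (simp add: R_def coeff_sum)
  also have "\<dots> = e k0 * coeff (q k0) d0"
  proof (rule sum.remove[THEN trans])
    show "finite K" by (rule fin)
    show "k0 \<in> K" using k0 by (simp add: K'_def)
    have "(\<Sum>k\<in>K - {k0}. e k * coeff (q k) d0) = 0"
    proof (rule sum.neutral, rule ballI)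
      fix k assume k: "k \<in> K - {k0}"
      show "e k * coeff (q k) d0 = 0"
      proof (cases "e k = 0")
        case False
        then have "k \<in> K'" using k by (simp add: K'_def)
        then have "degree (q k) \<le> d0" by (rule le)
        moreover have "degree (q k) \<noteq> d0"
          using inj k k0 unfolding inj_on_def K'_def by auto
        ultimately show ?thesis by (simp add: coeff_eq_0)
      qed simp
    qed
    then show "e k0 * coeff (q k0) d0 + (\<Sum>k\<in>K - {k0}. e k * coeff (q k) d0) = e k0 * coeff (q k0) d0" by simp
  qed
  finally have "coeff R d0 = e k0 * coeff (q k0) d0" .
  moreover have "coeff (q k0) d0 \<noteq> 0"
  proof -
    have "q k0 \<noteq> 0" using k0 nz by (simp add: K'_def)
    then show ?thesis using k0(2) by (metis leading_coeff_0_iff)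
  qed
  moreover have "e k0 \<noteq> 0" using k0 by (simp add: K'_def)
  ultimately show False using R0 by simp
qed



lemma ytrig_pos: "m \<ge> 0 \<Longrightarrow> ytrig m \<phi> = (if m = 0 then 1 / sqrt 2 else 1) * poly (cheb (nat m)) (cos \<phi>)"
proof -
  assume m: "m \<ge> 0"
  have "real_of_int m = real (nat m)" using m by simp
  then show ?thesis using m by (cases "m = 0") (auto simp: ytrig_def cos_cheb[symmetric])
qed

lemma ytrig_neg: "m \<le> -1 \<Longrightarrow> ytrig m \<phi> = sin \<phi> * poly (chebU (nat \<bar>m\<bar> - 1)) (cos \<phi>)"
proof -
  assume m: "m \<le> -1"
  have "real_of_int \<bar>m\<bar> = real (Suc (nat \<bar>m\<bar> - 1))" using m by simp
  then show ?thesis using m by (simp add: ytrig_def sin_chebU[symmetric])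
qed

lemma trig_indep:
  assumes z: "\<forall>\<phi>. 0 \<le> \<phi> \<and> \<phi> < 2 * pi \<longrightarrow> (\<Sum>m\<in>{-int N..int N}. d m * ytrig m \<phi>) = 0"
  shows "\<forall>m\<in>{-int N..int N}. d m = 0"
proof -
  define A where "A = {0..int N}"
  define B where "B = {-int N..-1}"
  have AB: "{-int N..int N} = A \<union> B" "A \<inter> B = {}" by (auto simp: A_def B_def)
  define E where "E = (\<lambda>t. \<Sum>m\<in>A. (d m * (if m = 0 then 1 / sqrt 2 else 1)) * poly (cheb (nat m)) t)"
  define Od where "Od = (\<lambda>t. \<Sum>m\<in>B. d m * poly (chebU (nat \<bar>m\<bar> - 1)) t)"
  have S: "(\<Sum>m\<in>{-int N..int N}. d m * ytrig m \<phi>) = E (cos \<phi>) + sin \<phi> * Od (cos \<phi>)" for \<phi>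
  proof -
    have "(\<Sum>m\<in>{-int N..int N}. d m * ytrig m \<phi>) = (\<Sum>m\<in>A. d m * ytrig m \<phi>) + (\<Sum>m\<in>B. d m * ytrig m \<phi>)"
      unfolding AB(1) by (rule sum.union_disjoint) (auto simp: A_def B_def)
    also have "(\<Sum>m\<in>A. d m * ytrig m \<phi>) = E (cos \<phi>)"
      unfolding E_def by (rule sum.cong) (auto simp: A_def ytrig_pos)
    also have "(\<Sum>m\<in>B. d m * ytrig m \<phi>) = sin \<phi> * Od (cos \<phi>)"
      unfolding Od_def sum_distrib_left by (rule sum.cong) (auto simp: B_def ytrig_neg)
    finally show ?thesis .
  qed
  have EO: "E t = 0 \<and> Od t = 0" if t: "-1 < t" "t < 1" for t
  proof -
    define \<phi> where "\<phi> = arccos t"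
    have \<phi>: "0 < \<phi>" "\<phi> < pi" using arccos_lt_bounded[OF t] by (auto simp: \<phi>_def)
    have c: "cos \<phi> = t" using t by (simp add: \<phi>_def)
    have s: "sin \<phi> > 0" using sin_gt_zero[OF \<phi>] .
    have "E t + sin \<phi> * Od t = 0" using z[rule_format, of \<phi>] \<phi> S[of \<phi>] c by simp
    moreover have "E t - sin \<phi> * Od t = 0" using z[rule_format, of "2 * pi - \<phi>"] \<phi> S[of "2 * pi - \<phi>"] c by simp
    ultimately show ?thesis using s by auto
  qed
  have a: "\<forall>m\<in>A. d m * (if m = 0 then 1 / sqrt 2 else 1) = 0"
  proof (rule deg_indep[of A "\<lambda>m. cheb (nat m)"])
    show "finite A" by (simp add: A_def)
    show "\<forall>k\<in>A. cheb (nat k) \<noteq> 0" by (simp add: cheb_nonzero)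
    show "inj_on (\<lambda>k. degree (cheb (nat k))) A" by (auto simp: inj_on_def cheb_degree A_def)
    show "\<forall>t. - 1 < t \<and> t < 1 \<longrightarrow> (\<Sum>k\<in>A. d k * (if k = 0 then 1 / sqrt 2 else 1) * poly (cheb (nat k)) t) = 0"
      using EO by (simp add: E_def)
  qed
  have b: "\<forall>m\<in>B. d m = 0"
  proof (rule deg_indep[of B "\<lambda>m. chebU (nat \<bar>m\<bar> - 1)"])
    show "finite B" by (simp add: B_def)
    show "\<forall>k\<in>B. chebU (nat \<bar>k\<bar> - 1) \<noteq> 0" by (simp add: chebU_nonzero)
    show "inj_on (\<lambda>k. degree (chebU (nat \<bar>k\<bar> - 1))) B" by (auto simp: inj_on_def chebU_degree B_def)
    show "\<forall>t. - 1 < t \<and> t < 1 \<longrightarrow> (\<Sum>k\<in>B. d k * poly (chebU (nat \<bar>k\<bar> - 1)) t) = 0"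
      using EO by (simp add: Od_def)
  qed
  show ?thesis using a b AB by (auto split: if_splits)
qed



lemma LambdaStar_sum:
  "(\<Sum>\<alpha>\<in>LambdaStar N. f \<alpha>) = (\<Sum>m\<in>{-int N..int N}. \<Sum>l\<in>{nat \<bar>m\<bar>..N}. \<Sum>k\<in>{l..N}. f (k, l, m))"
proof -
  define S where "S = (SIGMA m:{-int N..int N}. SIGMA l:{nat \<bar>m\<bar>..N}. {l..N})"
  define g where "g = (\<lambda>(m::int, l::nat, k::nat). (k, l, m))"
  have inj: "inj_on g S" by (auto simp: inj_on_def g_def)
  have img: "g ` S = LambdaStar N"
  proof
    show "g ` S \<subseteq> LambdaStar N" by (auto simp: g_def S_def LambdaStar_eq)
    show "LambdaStar N \<subseteq> g ` S"
    proof
      fix a assume "a \<in> LambdaStar N"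
      then obtain k l m where a: "a = (k, l, m)" "l \<le> k" "k \<le> N" "- int l \<le> m" "m \<le> int l"
        by (auto simp: LambdaStar_eq)
      then have "(m, l, k) \<in> S" by (auto simp: S_def)
      then show "a \<in> g ` S" using a by (auto simp: g_def image_iff intro!: bexI[of _ "(m, l, k)"])
    qed
  qed
  have "(\<Sum>\<alpha>\<in>LambdaStar N. f \<alpha>) = (\<Sum>p\<in>S. f (g p))"
    unfolding img[symmetric] by (rule sum.reindex[OF inj, unfolded comp_def])
  also have "\<dots> = (\<Sum>m\<in>{-int N..int N}. \<Sum>p\<in>(SIGMA l:{nat \<bar>m\<bar>..N}. {l..N}). f (g (m, p)))"
    unfolding S_def by (subst sum.Sigma) (auto simp: split_def)
  also have "\<dots> = (\<Sum>m\<in>{-int N..int N}. \<Sum>l\<in>{nat \<bar>m\<bar>..N}. \<Sum>k\<in>{l..N}. f (k, l, m))"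
  proof (rule sum.cong[OF refl])
    fix m
    show "(\<Sum>p\<in>(SIGMA l:{nat \<bar>m\<bar>..N}. {l..N}). f (g (m, p))) = (\<Sum>l\<in>{nat \<bar>m\<bar>..N}. \<Sum>k\<in>{l..N}. f (k, l, m))"
      by (subst sum.Sigma) (auto simp: g_def split_def)
  qed
  finally show ?thesis .
qed

definition Ch :: "nat \<Rightarrow> nat \<Rightarrow> real poly" where
  "Ch k l = (pderiv ^^ (l + 1)) (cheb (k + 1))"

definition Ek :: "nat \<Rightarrow> nat \<Rightarrow> nat \<Rightarrow> real" where
  "Ek k l \<mu> = acoef k l powr (-1/2) * sqrt ((2 * real l + 1) / (2 * pi)) *
     ((-1)^\<mu> * sqrt (fact (l - \<mu>) / fact (l + \<mu>))) * ((-1)^\<mu> / (2^l * fact l))"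

lemma Ek_nonzero: "l \<le> k \<Longrightarrow> Ek k l \<mu> \<noteq> 0"
proof -
  assume "l \<le> k"
  have "acoef k l > 0" by (simp add: acoef_def)
  then show ?thesis by (simp add: Ek_def)
qed

lemma Yang_factor:
  assumes th: "0 \<le> \<theta>" "\<theta> \<le> pi"
  shows "Yang (k, l, m) \<phi> \<theta> \<chi> = Ek k l (nat \<bar>m\<bar>) * (sin \<chi> ^ l * poly (Ch k l) (cos \<chi>)) *
     (sin \<theta> ^ nat \<bar>m\<bar> * poly (Dpoly l (nat \<bar>m\<bar>)) (cos \<theta>)) * ytrig m \<phi>"
proof -
  have s: "sqrt (1 - cos \<theta> ^ 2) = sin \<theta>"
    using sin_ge_zero[OF th] by (simp add: sin_squared_eq[symmetric])
  show ?thesis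
    by (simp add: Yang_def Ysph_def assocK_def assocP_def Dpoly_def s Ek_def Ch_def chebD_def algebra_simps)
qed

lemma Ch_nonzero: "l \<le> k \<Longrightarrow> Ch k l \<noteq> 0"
  unfolding Ch_def by (rule pderiv_iter_nonzero) (auto simp: cheb_nonzero cheb_degree)

lemma Ch_degree: "degree (Ch k l) = k - l"
  unfolding Ch_def by (subst degree_pderiv_iter) (simp add: cheb_degree)



lemma indep_core:
  assumes H: "\<forall>\<phi> \<theta> \<chi>. 0 \<le> \<phi> \<and> \<phi> < 2 * pi \<and> 0 < \<theta> \<and> \<theta> < pi \<and> 0 < \<chi> \<and> \<chi> < pi \<longrightarrow>
      (\<Sum>\<alpha>\<in>LambdaStar N. c \<alpha> * Yang \<alpha> \<phi> \<theta> \<chi>) = 0"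
  shows "\<forall>\<alpha>\<in>LambdaStar N. c \<alpha> = 0"
proof -
  define SC where "SC = (\<lambda>k l \<chi>. sin \<chi> ^ l * poly (Ch k l) (cos \<chi>))"
  define ST where "ST = (\<lambda>l \<mu> \<theta>. sin \<theta> ^ \<mu> * poly (Dpoly l \<mu>) (cos \<theta>))"
  define el where "el = (\<lambda>m l \<chi>. \<Sum>k\<in>{l..N}. c (k, l, m) * Ek k l (nat \<bar>m\<bar>) * SC k l \<chi>)"
  define dm where "dm = (\<lambda>m \<theta> \<chi>. \<Sum>l\<in>{nat \<bar>m\<bar>..N}. el m l \<chi> * ST l (nat \<bar>m\<bar>) \<theta>)"
  have step1: "dm m \<theta> \<chi> = 0" if m: "m \<in> {-int N..int N}" and th: "0 < \<theta>" "\<theta> < pi" and ch: "0 < \<chi>" "\<chi> < pi" for m \<theta> \<chi>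
  proof -
    have "\<forall>\<phi>. 0 \<le> \<phi> \<and> \<phi> < 2 * pi \<longrightarrow> (\<Sum>m\<in>{-int N..int N}. dm m \<theta> \<chi> * ytrig m \<phi>) = 0"
    proof (intro allI impI)
      fix \<phi> assume ph: "0 \<le> \<phi> \<and> \<phi> < 2 * pi"
      have "(\<Sum>\<alpha>\<in>LambdaStar N. c \<alpha> * Yang \<alpha> \<phi> \<theta> \<chi>) = (\<Sum>m\<in>{-int N..int N}. dm m \<theta> \<chi> * ytrig m \<phi>)"
        unfolding LambdaStar_sum dm_def el_def sum_distrib_right
        using th by (intro sum.cong refl) (simp add: Yang_factor SC_def ST_def)
      then show "(\<Sum>m\<in>{-int N..int N}. dm m \<theta> \<chi> * ytrig m \<phi>) = 0" using H ph th ch by simp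
    qed
    from trig_indep[where N=N and d="\<lambda>m. dm m \<theta> \<chi>"] this m show ?thesis by blast
  qed
  have step2: "el m l \<chi> = 0" if m: "m \<in> {-int N..int N}" and l: "l \<in> {nat \<bar>m\<bar>..N}" and ch: "0 < \<chi>" "\<chi> < pi" for m l \<chi>
  proof -
    let ?\<mu> = "nat \<bar>m\<bar>"
    have "\<forall>l\<in>{?\<mu>..N}. el m l \<chi> = 0"
    proof (rule deg_indep[of _ "\<lambda>l. Dpoly l ?\<mu>"])
      show "finite {?\<mu>..N}" by simp
      show "\<forall>k\<in>{?\<mu>..N}. Dpoly k ?\<mu> \<noteq> 0" using Dpoly_nonzero by auto
      show "inj_on (\<lambda>k. degree (Dpoly k ?\<mu>)) {?\<mu>..N}" by (auto simp: inj_on_def Dpoly_degree) linarith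
      show "\<forall>t. - 1 < t \<and> t < 1 \<longrightarrow> (\<Sum>k\<in>{?\<mu>..N}. el m k \<chi> * poly (Dpoly k ?\<mu>) t) = 0"
      proof (intro allI impI)
        fix t :: real assume t: "- 1 < t \<and> t < 1"
        define \<theta> where "\<theta> = arccos t"
        have th: "0 < \<theta>" "\<theta> < pi" using arccos_lt_bounded[of t] t by (auto simp: \<theta>_def)
        have c: "cos \<theta> = t" using t by (simp add: \<theta>_def)
        have s: "sin \<theta> ^ ?\<mu> > 0" using sin_gt_zero[OF th] by simp
        have "dm m \<theta> \<chi> = sin \<theta> ^ ?\<mu> * (\<Sum>k\<in>{?\<mu>..N}. el m k \<chi> * poly (Dpoly k ?\<mu>) t)"
          unfolding dm_def ST_def c sum_distrib_left by (intro sum.cong refl) (simp add: c)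
        then show "(\<Sum>k\<in>{?\<mu>..N}. el m k \<chi> * poly (Dpoly k ?\<mu>) t) = 0"
          using step1[OF m th ch] s sin_gt_zero[OF th] by simp
      qed
    qed
    then show ?thesis using l by blast
  qed
  show ?thesis
  proof
    fix \<alpha> assume "\<alpha> \<in> LambdaStar N"
    then obtain k l m where a: "\<alpha> = (k, l, m)" "l \<le> k" "k \<le> N" "- int l \<le> m" "m \<le> int l"
      by (auto simp: LambdaStar_eq)
    have m: "m \<in> {-int N..int N}" and l: "l \<in> {nat \<bar>m\<bar>..N}" using a by auto
    have "\<forall>k\<in>{l..N}. c (k, l, m) * Ek k l (nat \<bar>m\<bar>) = 0"
    proof (rule deg_indep[of _ "\<lambda>k. Ch k l"])
      show "finite {l..N}" by simp
      show "\<forall>k\<in>{l..N}. Ch k l \<noteq> 0" using Ch_nonzero by auto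
      show "inj_on (\<lambda>k. degree (Ch k l)) {l..N}" by (auto simp: inj_on_def Ch_degree)
      show "\<forall>t. - 1 < t \<and> t < 1 \<longrightarrow> (\<Sum>k\<in>{l..N}. c (k, l, m) * Ek k l (nat \<bar>m\<bar>) * poly (Ch k l) t) = 0"
      proof (intro allI impI)
        fix t :: real assume t: "- 1 < t \<and> t < 1"
        define \<chi> where "\<chi> = arccos t"
        have ch: "0 < \<chi>" "\<chi> < pi" using arccos_lt_bounded[of t] t by (auto simp: \<chi>_def)
        have c: "cos \<chi> = t" using t by (simp add: \<chi>_def)
        have s: "sin \<chi> ^ l > 0" using sin_gt_zero[OF ch] by simp
        have "el m l \<chi> = sin \<chi> ^ l * (\<Sum>k\<in>{l..N}. c (k, l, m) * Ek k l (nat \<bar>m\<bar>) * poly (Ch k l) t)"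
          unfolding el_def SC_def sum_distrib_left by (intro sum.cong refl) (simp add: c)
        then show "(\<Sum>k\<in>{l..N}. c (k, l, m) * Ek k l (nat \<bar>m\<bar>) * poly (Ch k l) t) = 0"
          using step2[OF m l ch] s sin_gt_zero[OF ch] by simp
      qed
    qed
    then have "c (k, l, m) * Ek k l (nat \<bar>m\<bar>) = 0" using a by auto
    then show "c \<alpha> = 0" using Ek_nonzero[OF a(2)] a(1) by simp
  qed
qed

lemma invstereo_onto:
  assumes y: "y1^2 + y2^2 + y3^2 + y4^2 = 1" and y4: "y4 \<noteq> 1"
  shows "invstereo (y1 / (1 - y4), y2 / (1 - y4), y3 / (1 - y4)) = (y1, y2, y3, y4)"
proof -
  define w where "w = 1 - y4"
  have w: "w \<noteq> 0" using y4 by (simp add: w_def)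
  define q where "q = (y1 / w)^2 + (y2 / w)^2 + (y3 / w)^2"
  have "q = (y1^2 + y2^2 + y3^2) / w^2" by (simp add: q_def power_divide add_divide_distrib)
  also have "y1^2 + y2^2 + y3^2 = (1 - y4) * (1 + y4)" using y by (simp add: algebra_simps power2_eq_square)
  finally have q: "q = (1 + y4) / w" using w by (simp add: w_def power2_eq_square)
  have q1: "q + 1 = 2 / w" using w by (simp add: q w_def field_simps)
  have q2: "q - 1 = 2 * y4 / w" using w by (simp add: q w_def field_simps)
  have "invstereo (y1 / w, y2 / w, y3 / w) = (y1, y2, y3, y4)"
    using w by (simp add: invstereo_simp Let_def q_def[symmetric] q1 q2)
  then show ?thesis by (simp add: w_def)
qed

lemma sph3_sphere: "sph3 \<phi> \<theta> \<chi> = (y1, y2, y3, y4) \<Longrightarrow> y1^2 + y2^2 + y3^2 + y4^2 = 1"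
proof -
  assume h: "sph3 \<phi> \<theta> \<chi> = (y1, y2, y3, y4)"
  then have y: "y1 = sin \<theta> * cos \<phi> * sin \<chi>" "y2 = sin \<theta> * sin \<phi> * sin \<chi>" "y3 = cos \<theta> * sin \<chi>" "y4 = cos \<chi>"
    by (auto simp: sph3_def)
  have "y1^2 + y2^2 = (sin \<theta> * sin \<chi>)^2 * ((sin \<phi>)^2 + (cos \<phi>)^2)" unfolding y by algebra
  then have a: "y1^2 + y2^2 = (sin \<theta> * sin \<chi>)^2" by simp
  have "(sin \<theta> * sin \<chi>)^2 + y3^2 = (sin \<chi>)^2 * ((sin \<theta>)^2 + (cos \<theta>)^2)" unfolding y by algebra
  then have b: "(sin \<theta> * sin \<chi>)^2 + y3^2 = (sin \<chi>)^2" by simp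
  show ?thesis using a b by (simp add: y)
qed

lemma W_indep': "(\<lambda>x. \<Sum>i\<in>LambdaStar N. c i * Wfun i x) = (\<lambda>x. 0) \<Longrightarrow> \<forall>i\<in>LambdaStar N. c i = 0"
proof -
  assume h: "(\<lambda>x. \<Sum>i\<in>LambdaStar N. c i * Wfun i x) = (\<lambda>x. 0)"
  show ?thesis
  proof (rule indep_core, intro allI impI)
    fix \<phi> \<theta> \<chi> assume r: "0 \<le> \<phi> \<and> \<phi> < 2 * pi \<and> 0 < \<theta> \<and> \<theta> < pi \<and> 0 < \<chi> \<and> \<chi> < pi"
    obtain y1 y2 y3 y4 where y: "sph3 \<phi> \<theta> \<chi> = (y1, y2, y3, y4)" by (cases "sph3 \<phi> \<theta> \<chi>") auto
    have sp: "y1^2 + y2^2 + y3^2 + y4^2 = 1" by (rule sph3_sphere[OF y])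
    have "y4 = cos \<chi>" using y by (simp add: sph3_def)
    moreover have "cos \<chi> < 1" using r cos_monotone_0_pi[of 0 \<chi>] by simp
    ultimately have y4: "y4 \<noteq> 1" by simp
    define x where "x = (y1 / (1 - y4), y2 / (1 - y4), y3 / (1 - y4))"
    have ix: "invstereo x = (y1, y2, y3, y4)" unfolding x_def by (rule invstereo_onto[OF sp y4])
    have Y: "Ycal \<alpha> (y1, y2, y3, y4) = Yang \<alpha> \<phi> \<theta> \<chi>" if al: "\<alpha> \<in> LambdaStar N" for \<alpha>
    proof -
      obtain k l m where a: "\<alpha> = (k, l, m)" "l \<le> k" "- int l \<le> m" "m \<le> int l"
        using al by (auto simp: LambdaStar_eq)
      then have "nat \<bar>m\<bar> \<le> l" by simp
      then obtain P where P: "\<forall>\<phi> \<theta> \<chi>. 0 \<le> \<theta> \<longrightarrow> \<theta> \<le> pi \<longrightarrow> Yang \<alpha> \<phi> \<theta> \<chi> = P (sph3 \<phi> \<theta> \<chi>)"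
        using Yang_poly[OF a(2)] a(1) by blast
      have "Ycal \<alpha> (y1, y2, y3, y4) = P (y1, y2, y3, y4)" by (rule Ycal_poly[OF P sp])
      also have "\<dots> = Yang \<alpha> \<phi> \<theta> \<chi>" using P r y by simp
      finally show ?thesis .
    qed
    have "0 = (\<Sum>i\<in>LambdaStar N. c i * Wfun i x)" using fun_cong[OF h, of x] by simp
    also have "\<dots> = sqrt (2 / (sqn3 x + 1)) * (\<Sum>i\<in>LambdaStar N. c i * Yang i \<phi> \<theta> \<chi>)"
      unfolding sum_distrib_left by (intro sum.cong refl) (simp add: Wfun_def ix Y)
    finally have "sqrt (2 / (sqn3 x + 1)) * (\<Sum>i\<in>LambdaStar N. c i * Yang i \<phi> \<theta> \<chi>) = 0" by simp
    moreover have "sqrt (2 / (sqn3 x + 1)) > 0" using sqn3_nonneg[of x] by simp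
    ultimately show "(\<Sum>i\<in>LambdaStar N. c i * Yang i \<phi> \<theta> \<chi>) = 0" by simp
  qed
qed

theorem lemma4p1:
  fixes N :: nat
  assumes "N \<ge> 1"
  shows "family_basis (HN N) (LambdaStar N) Wfun"
proof -
  let ?L = "LambdaStar N"
  let ?B = "Wfun ` ?L"
  have fin: "finite ?L" by (rule finite_LambdaStar)
  have inj: "inj_on Wfun ?L"
  proof (rule inj_onI, rule ccontr)
    fix a b assume ab: "a \<in> ?L" "b \<in> ?L" "Wfun a = Wfun b" "a \<noteq> b"
    define c where "c = (\<lambda>i. if i = a then (1::real) else if i = b then -1 else 0)"
    have "(\<lambda>x. \<Sum>i\<in>?L. c i * Wfun i x) = (\<lambda>x. 0)"
    proof
      fix x
      have "(\<Sum>i\<in>?L. c i * Wfun i x) = (\<Sum>i\<in>{a, b}. c i * Wfun i x)"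
        by (rule sum.mono_neutral_right) (use fin ab in \<open>auto simp: c_def\<close>)
      also have "\<dots> = 0" using ab by (simp add: c_def)
      finally show "(\<Sum>i\<in>?L. c i * Wfun i x) = 0" .
    qed
    from W_indep'[OF this] ab show False by (auto simp: c_def)
  qed
  have indB: "independent ?B"
  proof -
    have "\<forall>u. (\<Sum>v\<in>?B. u v *\<^sub>R v) = 0 \<longrightarrow> (\<forall>v\<in>?B. u v = 0)"
    proof (intro allI impI)
      fix u assume h: "(\<Sum>v\<in>?B. u v *\<^sub>R v) = 0"
      have "(\<lambda>x. \<Sum>i\<in>?L. u (Wfun i) * Wfun i x) = (\<lambda>x. 0)"
      proof
        fix x
        have "(\<Sum>v\<in>?B. u v *\<^sub>R v) x = 0" using h by simp
        then show "(\<Sum>i\<in>?L. u (Wfun i) * Wfun i x) = 0"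
          by (simp add: sum_fun_apply sum.reindex[OF inj])
      qed
      from W_indep'[OF this] show "\<forall>v\<in>?B. u v = 0" by auto
    qed
    then show ?thesis using fin by (intro independent_if_scalars_zero) auto
  qed
  have cardB: "card ?B = card ?L" using card_image[OF inj] .
  have BT: "?B \<subseteq> span (Tset N)" using W_in_span' by auto
  have spanB: "HN N \<subseteq> span ?B"
  proof
    fix v assume "v \<in> HN N"
    then have vT: "v \<in> span (Tset N)" by (simp add: HN_eq_span')
    show "v \<in> span ?B"
    proof (rule ccontr)
      assume nv: "v \<notin> span ?B"
      have "independent (insert v ?B)" using indB nv by (simp add: independent_insert)
      moreover have "insert v ?B \<subseteq> span (Tset N)" using vT BT by auto
      ultimately have "card (insert v ?B) \<le> card (Tset N)"
        using independent_span_bound[OF finite_Tset] by blast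
      moreover have "card (Tset N) \<le> card (Iset N)"
        unfolding Tset_def using card_image_le finite_Iset by blast
      moreover have "card (insert v ?B) = Suc (card ?B)"
        using nv span_base fin by (metis card_insert_disjoint finite_imageI)
      ultimately show False using cardB card_Iset_le[of N] by simp
    qed
  qed
  show ?thesis
    unfolding family_basis_def
  proof (intro conjI ballI allI impI)
    fix i assume "i \<in> ?L"
    then show "Wfun i \<in> HN N" using W_in_span' HN_eq_span' by auto
  next
    fix c i assume "(\<lambda>x. \<Sum>i\<in>?L. c i * Wfun i x) = (\<lambda>x. 0)" "i \<in> ?L"
    then show "c i = 0" using W_indep' by blast
  next
    fix v assume "v \<in> HN N"
    then have "v \<in> span ?B" using spanB by auto
    then obtain u where "v = (\<Sum>w\<in>?B. u w *\<^sub>R w)"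
      using span_finite[OF finite_imageI[OF fin]] by auto
    then have "v = (\<lambda>x. \<Sum>i\<in>?L. u (Wfun i) * Wfun i x)"
      by (simp add: fun_eq_iff sum_fun_apply sum.reindex[OF inj])
    then show "\<exists>c. v = (\<lambda>x. \<Sum>i\<in>?L. c i * Wfun i x)" by (intro exI[where x="\<lambda>i. u (Wfun i)"])
  qed
qed

end
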